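(* Let $\sigma,\tau\in G_n=\mathrm{Aut}_{K\text{-alg}}(\mathbb{S}_n)$. Then the following are equivalent: (1) $\sigma=\tau$; (2) $\sigma(x_i)=\tau(x_i)$ for all $i=1,\dots,n$; (3) $\sigma(y_i)=\tau(y_i)$ for all $i=1,\dots,n$.
   Context: $K$ is a field of characteristic zero and $n\ge1$. $\mathbb{S}_n$ is the $K$-algebra generated by $x_1,\dots,x_n,y_1,\dots,y_n$ subject to the defining relations $y_1x_1=\cdots=y_nx_n=1$ and $[x_i,y_j]=[x_i,x_j]=[y_i,y_j]=0$ for all $i\ne j$. *)

theory Defs
  imports Main
begin

text \<open>The Jacobson algebra S_n, defined literally by its presentation:
  the free associative K-algebra on letters x_1..x_n, y_1..y_n (noncommutative
  polynomials = finitely supported functions on words), modulo the two-sided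
  ideal generated by y_i x_i - 1 and the commutators [x_i,y_j], [x_i,x_j], [y_i,y_j]
  for i different from j.\<close>

datatype gen = Xg nat | Yg nat

type_synonym 'k ncpoly = "gen list \<Rightarrow> 'k"

definition gens :: "nat \<Rightarrow> gen set" where
  "gens n = {Xg i | i. i \<in> {1..n}} \<union> {Yg i | i. i \<in> {1..n}}"

definition ncP :: "nat \<Rightarrow> ('k::field) ncpoly set" where
  "ncP n = {f. finite {w. f w \<noteq> 0} \<and> (\<forall>w. f w \<noteq> 0 \<longrightarrow> set w \<subseteq> gens n)}"

definition nc_add :: "('k::field) ncpoly \<Rightarrow> 'k ncpoly \<Rightarrow> 'k ncpoly" where
  "nc_add f g = (\<lambda>w. f w + g w)"

definition nc_smult :: "'k::field \<Rightarrow> 'k ncpoly \<Rightarrow> 'k ncpoly" where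
  "nc_smult c f = (\<lambda>w. c * f w)"

definition nc_sub :: "('k::field) ncpoly \<Rightarrow> 'k ncpoly \<Rightarrow> 'k ncpoly" where
  "nc_sub f g = (\<lambda>w. f w - g w)"

definition nc_mult :: "('k::field) ncpoly \<Rightarrow> 'k ncpoly \<Rightarrow> 'k ncpoly" where
  "nc_mult f g = (\<lambda>w. \<Sum>(u, v)\<in>{(u, v). u @ v = w}. f u * g v)"

definition nc_mon :: "gen list \<Rightarrow> ('k::field) ncpoly" where
  "nc_mon w = (\<lambda>v. if v = w then 1 else 0)"

definition nc_comm :: "('k::field) ncpoly \<Rightarrow> 'k ncpoly \<Rightarrow> 'k ncpoly" where
  "nc_comm f g = nc_sub (nc_mult f g) (nc_mult g f)"

inductive_set relI :: "nat \<Rightarrow> ('k::field) ncpoly set" for n where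
  rel_yx: "i \<in> {1..n} \<Longrightarrow> nc_sub (nc_mult (nc_mon [Yg i]) (nc_mon [Xg i])) (nc_mon []) \<in> relI n"
| rel_xy: "i \<in> {1..n} \<Longrightarrow> j \<in> {1..n} \<Longrightarrow> i \<noteq> j \<Longrightarrow> nc_comm (nc_mon [Xg i]) (nc_mon [Yg j]) \<in> relI n"
| rel_xx: "i \<in> {1..n} \<Longrightarrow> j \<in> {1..n} \<Longrightarrow> i \<noteq> j \<Longrightarrow> nc_comm (nc_mon [Xg i]) (nc_mon [Xg j]) \<in> relI n"
| rel_yy: "i \<in> {1..n} \<Longrightarrow> j \<in> {1..n} \<Longrightarrow> i \<noteq> j \<Longrightarrow> nc_comm (nc_mon [Yg i]) (nc_mon [Yg j]) \<in> relI n"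
| rel_zero: "(\<lambda>w. 0) \<in> relI n"
| rel_add: "f \<in> relI n \<Longrightarrow> g \<in> relI n \<Longrightarrow> nc_add f g \<in> relI n"
| rel_smult: "f \<in> relI n \<Longrightarrow> nc_smult c f \<in> relI n"
| rel_lmult: "f \<in> relI n \<Longrightarrow> p \<in> ncP n \<Longrightarrow> nc_mult p f \<in> relI n"
| rel_rmult: "f \<in> relI n \<Longrightarrow> p \<in> ncP n \<Longrightarrow> nc_mult f p \<in> relI n"

definition Srel :: "nat \<Rightarrow> (('k::field) ncpoly \<times> 'k ncpoly) set" where
  "Srel n = {(f, g). f \<in> ncP n \<and> g \<in> ncP n \<and> nc_sub f g \<in> relI n}"

definition Sn :: "nat \<Rightarrow> ('k::field) ncpoly set set" where
  "Sn n = ncP n // Srel n"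

definition Sn_class :: "nat \<Rightarrow> ('k::field) ncpoly \<Rightarrow> 'k ncpoly set" where
  "Sn_class n f = Srel n `` {f}"

definition Sn_add :: "nat \<Rightarrow> ('k::field) ncpoly set \<Rightarrow> 'k ncpoly set \<Rightarrow> 'k ncpoly set" where
  "Sn_add n A B = Sn_class n (nc_add (SOME a. a \<in> A) (SOME b. b \<in> B))"

definition Sn_mult :: "nat \<Rightarrow> ('k::field) ncpoly set \<Rightarrow> 'k ncpoly set \<Rightarrow> 'k ncpoly set" where
  "Sn_mult n A B = Sn_class n (nc_mult (SOME a. a \<in> A) (SOME b. b \<in> B))"

definition Sn_smult :: "nat \<Rightarrow> 'k::field \<Rightarrow> 'k ncpoly set \<Rightarrow> 'k ncpoly set" where
  "Sn_smult n c A = Sn_class n (nc_smult c (SOME a. a \<in> A))"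

definition Sn_one :: "nat \<Rightarrow> ('k::field) ncpoly set" where
  "Sn_one n = Sn_class n (nc_mon [])"

definition Sn_x :: "nat \<Rightarrow> nat \<Rightarrow> ('k::field) ncpoly set" where
  "Sn_x n i = Sn_class n (nc_mon [Xg i])"

definition Sn_y :: "nat \<Rightarrow> nat \<Rightarrow> ('k::field) ncpoly set" where
  "Sn_y n i = Sn_class n (nc_mon [Yg i])"

definition Sn_aut :: "nat \<Rightarrow> (('k::field) ncpoly set \<Rightarrow> 'k ncpoly set) \<Rightarrow> bool" where
  "Sn_aut n \<sigma> \<longleftrightarrow>
     bij_betw \<sigma> (Sn n) (Sn n) \<and>
     (\<forall>A\<in>Sn n. \<forall>B\<in>Sn n. \<sigma> (Sn_add n A B) = Sn_add n (\<sigma> A) (\<sigma> B)) \<and>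
     (\<forall>A\<in>Sn n. \<forall>B\<in>Sn n. \<sigma> (Sn_mult n A B) = Sn_mult n (\<sigma> A) (\<sigma> B)) \<and>
     (\<forall>c. \<forall>A\<in>Sn n. \<sigma> (Sn_smult n c A) = Sn_smult n c (\<sigma> A)) \<and>
     \<sigma> (Sn_one n) = Sn_one n"

end

theory Submission
  imports Defs "HOL-Library.Fun_Lexorder"
begin


lemma finite_splits: "finite {(u, v). u @ v = (w::'a list)}"
proof -
  have "{(u, v). u @ v = w} \<subseteq> (\<lambda>k. (take k w, drop k w)) ` {..length w}"
  proof
    fix p assume "p \<in> {(u, v). u @ v = w}"
    then obtain u v where p: "p = (u,v)" "u @ v = w" by auto
    then show "p \<in> (\<lambda>k. (take k w, drop k w)) ` {..length w}"
      by (intro image_eqI[of _ _ "length u"]) auto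
  qed
  then show ?thesis by (rule finite_subset) auto
qed

lemma nc_mult_mon: "nc_mult (nc_mon u) (nc_mon v) = (nc_mon (u @ v) :: ('k::field) ncpoly)"
proof
  fix w
  have "nc_mult (nc_mon u) (nc_mon v) w =
     (\<Sum>p\<in>{(a, b). a @ b = w}. if p = (u,v) then 1 else (0::'k))"
    unfolding nc_mult_def nc_mon_def by (intro sum.cong) (auto split: if_splits)
  also have "\<dots> = (if u @ v = w then 1 else 0)"
    using finite_splits[of w] by (simp add: sum.delta')
  finally show "nc_mult (nc_mon u) (nc_mon v) w = (nc_mon (u @ v) :: 'k ncpoly) w"
    by (auto simp: nc_mon_def)
qed

lemma ncP_mon: "set w \<subseteq> gens n \<Longrightarrow> (nc_mon w :: ('k::field) ncpoly) \<in> ncP n"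
  unfolding ncP_def nc_mon_def by auto

lemma ncP_zero: "(\<lambda>w. 0) \<in> ncP n"
  unfolding ncP_def by auto

lemma ncP_add: "f \<in> ncP n \<Longrightarrow> g \<in> ncP n \<Longrightarrow> nc_add f g \<in> ncP n"
  unfolding ncP_def nc_add_def
  apply (auto intro: finite_subset[of _ "{w. f w \<noteq> 0} \<union> {w. g w \<noteq> 0}"])
  by (metis add.left_neutral subsetD)

lemma ncP_sub: "f \<in> ncP n \<Longrightarrow> g \<in> ncP n \<Longrightarrow> nc_sub f g \<in> ncP n"
  unfolding ncP_def nc_sub_def
  apply (auto intro: finite_subset[of _ "{w. f w \<noteq> 0} \<union> {w. g w \<noteq> 0}"])
  by (metis subsetD)

lemma ncP_smult: "f \<in> ncP n \<Longrightarrow> nc_smult c f \<in> ncP n"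
  unfolding ncP_def nc_smult_def
  by (auto intro: finite_subset[of _ "{w. f w \<noteq> 0}"])

lemma nc_mult_nz:
  assumes "nc_mult f g w \<noteq> 0"
  shows "\<exists>u v. u @ v = w \<and> f u \<noteq> 0 \<and> g v \<noteq> 0"
proof (rule ccontr)
  assume "\<not> ?thesis"
  then have "\<And>p. p \<in> {(u, v). u @ v = w} \<Longrightarrow> (case p of (u,v) \<Rightarrow> f u * g v) = 0" by auto
  then have "nc_mult f g w = 0" unfolding nc_mult_def by (intro sum.neutral) auto
  with assms show False by simp
qed

lemma ncP_mult: "f \<in> ncP n \<Longrightarrow> g \<in> ncP n \<Longrightarrow> nc_mult f g \<in> ncP n"
proof -
  assume f: "f \<in> ncP n" and g: "g \<in> ncP n"
  have "{w. nc_mult f g w \<noteq> 0} \<subseteq> (\<lambda>(u,v). u @ v) ` ({u. f u \<noteq> 0} \<times> {v. g v \<noteq> 0})"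
    by (auto dest!: nc_mult_nz)
  moreover have "finite ((\<lambda>(u,v). u @ v) ` ({u. f u \<noteq> 0} \<times> {v. g v \<noteq> 0}))"
    using f g unfolding ncP_def by auto
  ultimately have "finite {w. nc_mult f g w \<noteq> 0}" by (rule finite_subset)
  moreover have "set w \<subseteq> gens n" if "nc_mult f g w \<noteq> 0" for w
    using nc_mult_nz[OF that] f g unfolding ncP_def by fastforce
  ultimately show ?thesis unfolding ncP_def by auto
qed

lemma nc_mult_sub_left: "nc_mult (nc_sub f g) h = nc_sub (nc_mult f h) (nc_mult g h)"
  unfolding nc_mult_def nc_sub_def
  by (auto simp: sum_subtractf[symmetric] algebra_simps intro!: sum.cong)

lemma nc_mult_sub_right: "nc_mult h (nc_sub f g) = nc_sub (nc_mult h f) (nc_mult h g)"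
  unfolding nc_mult_def nc_sub_def
  by (auto simp: sum_subtractf[symmetric] algebra_simps intro!: sum.cong)

lemma relI_ncP: "f \<in> relI n \<Longrightarrow> f \<in> ncP n"
proof (induction rule: relI.induct)
  case (rel_yx i) then show ?case
    by (intro ncP_sub ncP_mult ncP_mon) (auto simp: gens_def)
next
  case (rel_xy i j) then show ?case unfolding nc_comm_def
    by (intro ncP_sub ncP_mult ncP_mon) (auto simp: gens_def)
next
  case (rel_xx i j) then show ?case unfolding nc_comm_def
    by (intro ncP_sub ncP_mult ncP_mon) (auto simp: gens_def)
next
  case (rel_yy i j) then show ?case unfolding nc_comm_def
    by (intro ncP_sub ncP_mult ncP_mon) (auto simp: gens_def)
qed (auto intro: ncP_zero ncP_add ncP_smult ncP_mult)

lemma relI_sum: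
  assumes "finite S" "\<And>s. s \<in> S \<Longrightarrow> F s \<in> relI n"
  shows "(\<lambda>x. \<Sum>s\<in>S. F s x) \<in> relI n"
  using assms
proof (induction S rule: finite_induct)
  case empty then show ?case by (simp add: relI.rel_zero)
next
  case (insert a S)
  have "(\<lambda>x. \<Sum>s\<in>insert a S. F s x) = nc_add (F a) (\<lambda>x. \<Sum>s\<in>S. F s x)"
    using insert by (auto simp: nc_add_def)
  then show ?case using insert by (auto intro: relI.rel_add)
qed

lemma relI_sub_self: "nc_sub f f \<in> relI n"
proof -
  have "nc_sub f f = (\<lambda>w. 0)" by (auto simp: nc_sub_def)
  then show ?thesis by (simp add: relI.rel_zero)
qed

lemma relI_sub_sym: "nc_sub f g \<in> relI n \<Longrightarrow> nc_sub g f \<in> relI n"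
proof -
  assume "nc_sub f g \<in> relI n"
  then have "nc_smult (-1) (nc_sub f g) \<in> relI n" by (rule relI.rel_smult)
  moreover have "nc_smult (-1) (nc_sub f g) = nc_sub g f" by (auto simp: nc_smult_def nc_sub_def)
  ultimately show ?thesis by simp
qed

lemma relI_sub_trans: "nc_sub f g \<in> relI n \<Longrightarrow> nc_sub g h \<in> relI n \<Longrightarrow> nc_sub f h \<in> relI n"
proof -
  assume "nc_sub f g \<in> relI n" "nc_sub g h \<in> relI n"
  then have "nc_add (nc_sub f g) (nc_sub g h) \<in> relI n" by (rule relI.rel_add)
  moreover have "nc_add (nc_sub f g) (nc_sub g h) = nc_sub f h" by (auto simp: nc_add_def nc_sub_def)
  ultimately show ?thesis by simp
qed

lemma equiv_Srel: "equiv (ncP n) (Srel n)"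
  unfolding equiv_def refl_on_def sym_def trans_def Srel_def
  by (auto intro: relI_sub_self relI_sub_sym relI_sub_trans)




type_synonym 'k vec = "(nat \<Rightarrow> nat) \<Rightarrow> 'k"
type_synonym 'k op = "'k vec \<Rightarrow> 'k vec"

definition adm :: "nat \<Rightarrow> (nat \<Rightarrow> nat) \<Rightarrow> bool" where
  "adm n \<gamma> \<longleftrightarrow> (\<forall>i. i \<notin> {1..n} \<longrightarrow> \<gamma> i = 0)"

definition Xop :: "nat \<Rightarrow> nat \<Rightarrow> ('k::field) op" where
  "Xop n i v = (\<lambda>\<gamma>. if adm n \<gamma> \<and> 0 < \<gamma> i then v (\<gamma>(i := \<gamma> i - 1)) else 0)"
definition Yop :: "nat \<Rightarrow> nat \<Rightarrow> ('k::field) op" where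
  "Yop n i v = (\<lambda>\<gamma>. if adm n \<gamma> then v (\<gamma>(i := Suc (\<gamma> i))) else 0)"
definition Rop :: "nat \<Rightarrow> ('k::field) op" where
  "Rop n v = (\<lambda>\<gamma>. if adm n \<gamma> then v \<gamma> else 0)"

fun gop :: "nat \<Rightarrow> gen \<Rightarrow> ('k::field) op" where
  "gop n (Xg i) = Xop n i"
| "gop n (Yg i) = Yop n i"

fun wop :: "nat \<Rightarrow> gen list \<Rightarrow> ('k::field) op" where
  "wop n [] = Rop n"
| "wop n (g # w) = gop n g \<circ> wop n w"

definition piop :: "nat \<Rightarrow> ('k::field) ncpoly \<Rightarrow> 'k op" where
  "piop n f = (\<lambda>v \<gamma>. \<Sum>w\<in>{w. f w \<noteq> 0}. f w * wop n w v \<gamma>)"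

lemma adm_upd [simp]: "i \<in> {1..n} \<Longrightarrow> adm n (\<gamma>(i := k)) = adm n \<gamma>"
  unfolding adm_def by auto

lemma gens_X [simp]: "Xg i \<in> gens n \<longleftrightarrow> i \<in> {1..n}"
  and gens_Y [simp]: "Yg i \<in> gens n \<longleftrightarrow> i \<in> {1..n}"
  unfolding gens_def by auto

lemma wop_form: "\<exists>C \<phi>. \<forall>v \<gamma>. wop n w v \<gamma> = (if C \<gamma> then v (\<phi> \<gamma>) else (0::'k::field))"
proof (induction w)
  case Nil show ?case by (rule exI[of _ "adm n"], rule exI[of _ id]) (simp add: Rop_def)
next
  case (Cons g w)
  then obtain C \<phi> where h: "\<And>v \<gamma>. wop n w v \<gamma> = (if C \<gamma> then v (\<phi> \<gamma>) else (0::'k))" by blast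
  show ?case
  proof (cases g)
    case (Xg i)
    show ?thesis
      by (rule exI[of _ "\<lambda>\<gamma>. adm n \<gamma> \<and> 0 < \<gamma> i \<and> C (\<gamma>(i := \<gamma> i - 1))"],
          rule exI[of _ "\<lambda>\<gamma>. \<phi> (\<gamma>(i := \<gamma> i - 1))"]) (simp add: Xg h Xop_def)
  next
    case (Yg i)
    show ?thesis
      by (rule exI[of _ "\<lambda>\<gamma>. adm n \<gamma> \<and> C (\<gamma>(i := Suc (\<gamma> i)))"],
          rule exI[of _ "\<lambda>\<gamma>. \<phi> (\<gamma>(i := Suc (\<gamma> i)))"]) (simp add: Yg h Yop_def)
  qed
qed

lemma wop_lin:
  "wop n w (\<lambda>\<gamma>. \<Sum>b\<in>B. c b * u b \<gamma>) \<gamma>' = (\<Sum>b\<in>B. (c b :: 'k::field) * wop n w (u b) \<gamma>')"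
proof -
  obtain C \<phi> where h: "\<And>v \<gamma>. wop n w v \<gamma> = (if C \<gamma> then v (\<phi> \<gamma>) else (0::'k))"
    using wop_form by blast
  show ?thesis by (simp add: h)
qed

lemma wop_add: "wop n w (\<lambda>\<gamma>. u \<gamma> + v \<gamma>) \<gamma>' = wop n w u \<gamma>' + wop n w v \<gamma>' \<and> (u \<gamma>::'k::field) = u \<gamma>"
  and wop_smult: "wop n w (\<lambda>\<gamma>. c * u \<gamma>) \<gamma>' = c * wop n w u \<gamma>' \<and> (c::'k) = c"
  and wop_zero: "wop n w (\<lambda>\<gamma>. 0) \<gamma>' = (0::'k::field)"
proof -
  note [simp] = if_distrib
  obtain C \<phi> where h: "\<And>v \<gamma>. wop n w v \<gamma> = (if C \<gamma> then v (\<phi> \<gamma>) else (0::'k))"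
    using wop_form by blast
  show "wop n w (\<lambda>\<gamma>. u \<gamma> + v \<gamma>) \<gamma>' = wop n w u \<gamma>' + wop n w v \<gamma>' \<and> (u \<gamma>::'k::field) = u \<gamma>"
       "wop n w (\<lambda>\<gamma>. c * u \<gamma>) \<gamma>' = c * wop n w u \<gamma>' \<and> (c::'k) = c"
       "wop n w (\<lambda>\<gamma>. 0) \<gamma>' = (0::'k)" by (simp_all add: h)
qed

lemma wop_nadm: "\<not> adm n \<gamma> \<Longrightarrow> wop n w v \<gamma> = 0"
proof (induction w arbitrary: \<gamma>)
  case Nil then show ?case by (simp add: Rop_def)
next
  case (Cons a w) then show ?case by (cases a) (auto simp: Xop_def Yop_def)
qed

lemma Rop_wop: "Rop n (wop n w v) = wop n w v"
  by (auto simp: Rop_def wop_nadm)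

lemma wop_append: "wop n (u @ w) v = wop n u (wop n w v)"
  by (induction u arbitrary: v) (auto simp: Rop_wop)

lemma piop_superset:
  assumes "finite T" "{w. f w \<noteq> 0} \<subseteq> T"
  shows "piop n f v \<gamma> = (\<Sum>w\<in>T. f w * wop n w v \<gamma>)"
  unfolding piop_def using assms by (intro sum.mono_neutral_left) auto

lemma ncP_fin: "f \<in> ncP n \<Longrightarrow> finite {w. f w \<noteq> 0}"
  unfolding ncP_def by auto

lemma piop_add:
  assumes "f \<in> ncP n" "g \<in> ncP n"
  shows "piop n (nc_add f g) v \<gamma> = piop n f v \<gamma> + piop n g v \<gamma>"
proof -
  let ?T = "{w. f w \<noteq> 0} \<union> {w. g w \<noteq> 0}"
  have T: "finite ?T" using assms by (auto dest: ncP_fin)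
  show ?thesis
    by (subst (1 2 3) piop_superset[OF T])
       (auto simp: nc_add_def sum.distrib algebra_simps)
qed

lemma piop_sub:
  assumes "f \<in> ncP n" "g \<in> ncP n"
  shows "piop n (nc_sub f g) v \<gamma> = piop n f v \<gamma> - piop n g v \<gamma>"
proof -
  let ?T = "{w. f w \<noteq> 0} \<union> {w. g w \<noteq> 0}"
  have T: "finite ?T" using assms by (auto dest: ncP_fin)
  show ?thesis
    by (subst (1 2 3) piop_superset[OF T])
       (auto simp: nc_sub_def sum_subtractf[symmetric] algebra_simps)
qed

lemma piop_smult:
  assumes "f \<in> ncP n"
  shows "piop n (nc_smult c f) v \<gamma> = c * piop n f v \<gamma>"
proof -
  let ?T = "{w. f w \<noteq> 0}"
  have T: "finite ?T" using assms by (auto dest: ncP_fin)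
  show ?thesis
    by (subst (1 2) piop_superset[OF T])
       (auto simp: nc_smult_def sum_distrib_left algebra_simps)
qed

lemma piop_zero: "piop n (\<lambda>w. 0) v \<gamma> = 0"
  unfolding piop_def by simp

lemma piop_mon: "piop n (nc_mon w) = wop n w"
proof (intro ext)
  fix v \<gamma>
  have "piop n (nc_mon w) v \<gamma> = (\<Sum>u\<in>{w}. nc_mon w u * wop n u v \<gamma>)"
    by (rule piop_superset) (auto simp: nc_mon_def)
  then show "piop n (nc_mon w) v \<gamma> = wop n w v \<gamma>" by (simp add: nc_mon_def)
qed

lemma piop_lin:
  assumes "f \<in> ncP n"
  shows "piop n f (\<lambda>\<gamma>. \<Sum>b\<in>B. c b * u b \<gamma>) \<gamma>' = (\<Sum>b\<in>B. c b * piop n f (u b) \<gamma>')"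
  unfolding piop_def by (simp add: wop_lin sum_distrib_left algebra_simps sum.swap[of _ B])

lemma piop_zero_vec: "piop n f (\<lambda>\<gamma>. 0) \<gamma>' = 0"
  unfolding piop_def by (simp add: wop_zero)

lemma piop_mult:
  assumes f: "f \<in> ncP n" and g: "g \<in> ncP n"
  shows "piop n (nc_mult f g) v \<gamma> = piop n f (piop n g v) \<gamma>"
proof -
  let ?Sf = "{w. f w \<noteq> 0}" and ?Sg = "{w. g w \<noteq> 0}"
  have Sf: "finite ?Sf" and Sg: "finite ?Sg" using f g by (auto dest: ncP_fin)
  let ?cat = "\<lambda>p. fst p @ snd p"
  let ?T = "?cat ` (?Sf \<times> ?Sg)"
  have T: "finite ?T" using Sf Sg by auto
  have sub: "{w. nc_mult f g w \<noteq> 0} \<subseteq> ?T"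
    by (auto dest!: nc_mult_nz) (metis (mono_tags, lifting) SigmaI fst_conv image_eqI mem_Collect_eq snd_conv)
  have inner: "nc_mult f g w = (\<Sum>p\<in>{p \<in> ?Sf \<times> ?Sg. ?cat p = w}. f (fst p) * g (snd p))" for w
  proof -
    have "nc_mult f g w = (\<Sum>p\<in>{(u, v). u @ v = w}. f (fst p) * g (snd p))"
      unfolding nc_mult_def by (intro sum.cong) auto
    also have "\<dots> = (\<Sum>p\<in>{p \<in> ?Sf \<times> ?Sg. ?cat p = w}. f (fst p) * g (snd p))"
      using finite_splits[of w] by (intro sum.mono_neutral_right) auto
    finally show ?thesis .
  qed
  have "piop n (nc_mult f g) v \<gamma> = (\<Sum>w\<in>?T. nc_mult f g w * wop n w v \<gamma>)"
    by (rule piop_superset[OF T sub])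
  also have "\<dots> = (\<Sum>w\<in>?T. \<Sum>p\<in>{p \<in> ?Sf \<times> ?Sg. ?cat p = w}. f (fst p) * g (snd p) * wop n (?cat p) v \<gamma>)"
    by (simp add: inner sum_distrib_right)
  also have "\<dots> = (\<Sum>p\<in>?Sf \<times> ?Sg. f (fst p) * g (snd p) * wop n (?cat p) v \<gamma>)"
    using Sf Sg by (subst sum.image_gen[of "?Sf \<times> ?Sg" _ ?cat]) auto
  also have "\<dots> = (\<Sum>a\<in>?Sf. \<Sum>b\<in>?Sg. f a * g b * wop n (a @ b) v \<gamma>)"
    by (simp add: sum.cartesian_product case_prod_beta)
  also have "\<dots> = piop n f (piop n g v) \<gamma>"
    unfolding piop_def by (simp add: wop_lin wop_append sum_distrib_left algebra_simps)
  finally show ?thesis .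
qed

lemma piop_relI: "f \<in> relI n \<Longrightarrow> piop n f v \<gamma> = 0"
proof (induction f arbitrary: v \<gamma> rule: relI.induct)
  case (rel_yx i)
  have m: "nc_mon [Yg i] \<in> ncP n" "nc_mon [Xg i] \<in> ncP n" "nc_mon [] \<in> ncP n" "nc_mon [Yg i, Xg i] \<in> ncP n"
    using rel_yx by (auto intro!: ncP_mon)
  show ?case using rel_yx
    by (simp add: piop_sub ncP_mult m nc_mult_mon piop_mon Xop_def Yop_def Rop_def)
next
  case (rel_xy i j)
  have m: "nc_mon [Yg j] \<in> ncP n" "nc_mon [Xg i] \<in> ncP n" "nc_mon [Xg i, Yg j] \<in> ncP n" "nc_mon [Yg j, Xg i] \<in> ncP n"
    using rel_xy by (auto intro!: ncP_mon)
  show ?case using rel_xy unfolding nc_comm_def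
    by (simp add: piop_sub ncP_mult m nc_mult_mon piop_mon Xop_def Yop_def Rop_def fun_upd_twist)
next
  case (rel_xx i j)
  have m: "nc_mon [Xg j] \<in> ncP n" "nc_mon [Xg i] \<in> ncP n" "nc_mon [Xg i, Xg j] \<in> ncP n" "nc_mon [Xg j, Xg i] \<in> ncP n"
    using rel_xx by (auto intro!: ncP_mon)
  show ?case using rel_xx unfolding nc_comm_def
    by (simp add: piop_sub ncP_mult m nc_mult_mon piop_mon Xop_def Yop_def Rop_def fun_upd_twist)
next
  case (rel_yy i j)
  have m: "nc_mon [Yg j] \<in> ncP n" "nc_mon [Yg i] \<in> ncP n" "nc_mon [Yg i, Yg j] \<in> ncP n" "nc_mon [Yg j, Yg i] \<in> ncP n"
    using rel_yy by (auto intro!: ncP_mon)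
  show ?case using rel_yy unfolding nc_comm_def
    by (simp add: piop_sub ncP_mult m nc_mult_mon piop_mon Xop_def Yop_def Rop_def fun_upd_twist)
next
  case rel_zero then show ?case by (simp add: piop_zero)
next
  case (rel_add f g) then show ?case by (simp add: piop_add relI_ncP)
next
  case (rel_smult f c) then show ?case by (simp add: piop_smult relI_ncP)
next
  case (rel_lmult f p)
  have "piop n (nc_mult p f) v \<gamma> = piop n p (piop n f v) \<gamma>"
    using rel_lmult by (simp add: piop_mult relI_ncP)
  also have "piop n f v = (\<lambda>\<gamma>. 0)" using rel_lmult by auto
  finally show ?case by (simp add: piop_zero_vec)
next
  case (rel_rmult f p)
  then show ?case by (simp add: piop_mult relI_ncP)
qed




definition wrel :: "nat \<Rightarrow> ('k::field) itself \<Rightarrow> gen list \<Rightarrow> gen list \<Rightarrow> bool" where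
  "wrel n T u v \<longleftrightarrow> set u \<subseteq> gens n \<and> set v \<subseteq> gens n \<and>
      nc_sub (nc_mon u) (nc_mon v :: 'k ncpoly) \<in> relI n"

lemma wrel_refl: "set u \<subseteq> gens n \<Longrightarrow> wrel n T u u"
  unfolding wrel_def by (simp add: relI_sub_self)

lemma wrel_sym: "wrel n T u v \<Longrightarrow> wrel n T v u"
  unfolding wrel_def by (simp add: relI_sub_sym)

lemma wrel_trans [trans]: "wrel n T u v \<Longrightarrow> wrel n T v w \<Longrightarrow> wrel n T u w"
  unfolding wrel_def by (blast intro: relI_sub_trans)

lemma wrel_ctx:
  assumes "wrel n (T::'k::field itself) a b" "set p \<subseteq> gens n" "set q \<subseteq> gens n"
  shows "wrel n T (p @ a @ q) (p @ b @ q)"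
proof -
  have r: "nc_sub (nc_mon a) (nc_mon b :: 'k ncpoly) \<in> relI n" and a: "set a \<subseteq> gens n"
    and b: "set b \<subseteq> gens n"
    using assms unfolding wrel_def by auto
  have "nc_mult (nc_mon p) (nc_mult (nc_sub (nc_mon a) (nc_mon b :: 'k ncpoly)) (nc_mon q)) \<in> relI n"
    using assms(2,3) by (intro relI.rel_lmult relI.rel_rmult r ncP_mon)
  moreover have "nc_mult (nc_mon p) (nc_mult (nc_sub (nc_mon a) (nc_mon b :: 'k ncpoly)) (nc_mon q))
      = nc_sub (nc_mon (p @ a @ q)) (nc_mon (p @ b @ q))"
    by (simp add: nc_mult_sub_left nc_mult_sub_right nc_mult_mon)
  ultimately show ?thesis using a b assms(2,3) unfolding wrel_def by auto
qed

lemma wrel_pre: "wrel n T a b \<Longrightarrow> set p \<subseteq> gens n \<Longrightarrow> wrel n T (p @ a) (p @ b)"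
  using wrel_ctx[of n T a b p "[]"] by simp

lemma wrel_post: "wrel n T a b \<Longrightarrow> set q \<subseteq> gens n \<Longrightarrow> wrel n T (a @ q) (b @ q)"
  using wrel_ctx[of n T a b "[]" q] by simp

lemma wrel_cons: "wrel n T a b \<Longrightarrow> g \<in> gens n \<Longrightarrow> wrel n T (g # a) (g # b)"
  using wrel_pre[of n T a b "[g]"] by simp

lemma wrel_yx: "i \<in> {1..n} \<Longrightarrow> wrel n (T::'k::field itself) [Yg i, Xg i] []"
  unfolding wrel_def using relI.rel_yx[of i n, where 'k='k] by (simp add: nc_mult_mon)

lemma wrel_comm:
  assumes "i \<in> {1..n}" "j \<in> {1..n}"
  shows "wrel n (T::'k::field itself) [Xg i, Yg j] [Yg j, Xg i] \<or> i = j"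
    and "wrel n T [Xg i, Xg j] [Xg j, Xg i]"
    and "wrel n T [Yg i, Yg j] [Yg j, Yg i]"
  using assms relI.rel_xy[of i n j, where 'k='k] relI.rel_xx[of i n j, where 'k='k]
     relI.rel_yy[of i n j, where 'k='k]
  unfolding wrel_def nc_comm_def
  by (cases "i = j"; auto simp: nc_mult_mon relI_sub_self)+

lemma wrel_rep:
  assumes "wrel n T [g, h] [h, g]"
  shows "wrel n T (g # replicate k h) (replicate k h @ [g])"
proof (induction k)
  case 0
  have "g \<in> gens n" using assms unfolding wrel_def by auto
  then show ?case by (simp add: wrel_refl)
next
  case (Suc k)
  have gh: "g \<in> gens n" "h \<in> gens n" using assms unfolding wrel_def by auto
  have "wrel n T (g # replicate (Suc k) h) ([g, h] @ replicate k h)" by (simp, rule wrel_refl) (auto simp: gh)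
  also have "wrel n T \<dots> ([h, g] @ replicate k h)" by (rule wrel_post[OF assms]) (auto simp: gh)
  also have "[h, g] @ replicate k h = [h] @ (g # replicate k h)" by simp
  also have "wrel n T \<dots> ([h] @ (replicate k h @ [g]))" by (rule wrel_pre[OF Suc]) (auto simp: gh)
  finally show ?case by simp
qed

fun cw :: "(nat \<Rightarrow> gen) \<Rightarrow> nat \<Rightarrow> (nat \<Rightarrow> nat) \<Rightarrow> gen list" where
  "cw C 0 \<alpha> = []"
| "cw C (Suc m) \<alpha> = replicate (\<alpha> (Suc m)) (C (Suc m)) @ cw C m \<alpha>"

lemma cw_set: "m \<le> n \<Longrightarrow> (\<And>i. i \<in> {1..n} \<Longrightarrow> C i \<in> gens n) \<Longrightarrow> set (cw C m \<alpha>) \<subseteq> gens n"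
  by (induction m) auto

lemma cwX_set [simp]: "m \<le> n \<Longrightarrow> set (cw Xg m \<alpha>) \<subseteq> gens n"
  and cwY_set [simp]: "m \<le> n \<Longrightarrow> set (cw Yg m \<alpha>) \<subseteq> gens n"
  by (rule cw_set; simp)+

lemma cw_cong: "(\<And>i. i \<in> {1..m} \<Longrightarrow> \<alpha> i = \<beta> i) \<Longrightarrow> cw C m \<alpha> = cw C m \<beta>"
  by (induction m) auto

lemma cw_zero [simp]: "cw C m (\<lambda>_. 0) = []"
  by (induction m) auto

lemma wXX: "i \<in> {1..n} \<Longrightarrow> j \<in> {1..n} \<Longrightarrow> wrel n (T::'k::field itself) [Xg i, Xg j] [Xg j, Xg i]"
  using wrel_comm(2) by blast
lemma wYY: "i \<in> {1..n} \<Longrightarrow> j \<in> {1..n} \<Longrightarrow> wrel n (T::'k::field itself) [Yg i, Yg j] [Yg j, Yg i]"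
  using wrel_comm(3) by blast
lemma wYX: "i \<in> {1..n} \<Longrightarrow> j \<in> {1..n} \<Longrightarrow> i \<noteq> j \<Longrightarrow> wrel n (T::'k::field itself) [Yg i, Xg j] [Xg j, Yg i]"
  using wrel_comm(1)[of j n i] by (auto intro: wrel_sym)

lemma cw_step:
  assumes comm: "\<And>i j. i \<in> {1..n} \<Longrightarrow> j \<in> {1..n} \<Longrightarrow> wrel n T [C i, C j] [C j, C i]"
    and gC: "\<And>i. i \<in> {1..n} \<Longrightarrow> C i \<in> gens n"
  shows "i \<in> {1..m} \<Longrightarrow> m \<le> n \<Longrightarrow> wrel n T (C i # cw C m \<alpha>) (cw C m (\<alpha>(i := Suc (\<alpha> i))))"
proof (induction m)
  case 0 then show ?case by simp
next
  case (Suc m)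
  show ?case
  proof (cases "i = Suc m")
    case True
    have "cw C m (\<alpha>(i := Suc (\<alpha> i))) = cw C m \<alpha>" using True by (intro cw_cong) auto
    then have "C i # cw C (Suc m) \<alpha> = cw C (Suc m) (\<alpha>(i := Suc (\<alpha> i)))" using True by simp
    moreover have "set (C i # cw C (Suc m) \<alpha>) \<subseteq> gens n" using Suc.prems gC cw_set[of "Suc m" n C \<alpha>, OF _ gC] by auto
    ultimately show ?thesis by (metis wrel_refl)
  next
    case False
    let ?k = "\<alpha> (Suc m)"
    have i: "i \<in> {1..m}" using Suc.prems False by auto
    have "wrel n T (C i # cw C (Suc m) \<alpha>) ((C i # replicate ?k (C (Suc m))) @ cw C m \<alpha>)"
      by simp (rule wrel_refl, use Suc.prems gC cw_set[of m n C \<alpha>, OF _ gC] in auto)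
    also have "wrel n T \<dots> ((replicate ?k (C (Suc m)) @ [C i]) @ cw C m \<alpha>)"
      by (rule wrel_post[OF wrel_rep[OF comm]]) (use Suc.prems gC cw_set[of m n C \<alpha>, OF _ gC] in auto)
    also have "\<dots> = replicate ?k (C (Suc m)) @ (C i # cw C m \<alpha>)" by simp
    also have "wrel n T \<dots> (replicate ?k (C (Suc m)) @ cw C m (\<alpha>(i := Suc (\<alpha> i))))"
      by (rule wrel_pre[OF Suc.IH]) (use Suc.prems gC i in auto)
    also have "\<dots> = cw C (Suc m) (\<alpha>(i := Suc (\<alpha> i)))" using False by simp
    finally show ?thesis .
  qed
qed

lemma Y_past_X:
  assumes "i \<in> {1..n}"
  shows "m \<le> n \<Longrightarrow> wrel n (T::'k::field itself) (Yg i # cw Xg m \<alpha>)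
     (if i \<le> m \<and> 0 < \<alpha> i then cw Xg m (\<alpha>(i := \<alpha> i - 1)) else cw Xg m \<alpha> @ [Yg i])"
proof (induction m)
  case 0 then show ?case using assms by (auto intro: wrel_refl)
next
  case (Suc m)
  let ?k = "\<alpha> (Suc m)"
  show ?case
  proof (cases "i = Suc m")
    case True
    show ?thesis
    proof (cases "0 < ?k")
      case True2: True
      obtain k' where k': "?k = Suc k'" using True2 by (cases ?k) auto
      have "Yg i # cw Xg (Suc m) \<alpha> = [Yg i, Xg i] @ (replicate k' (Xg i) @ cw Xg m \<alpha>)"
        using True k' by simp
      also have "wrel n T \<dots> ([] @ (replicate k' (Xg i) @ cw Xg m \<alpha>))"
        by (rule wrel_post[OF wrel_yx]) (use assms Suc.prems in auto)
      also have "[] @ (replicate k' (Xg i) @ cw Xg m \<alpha>) = cw Xg (Suc m) (\<alpha>(i := \<alpha> i - 1))"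
        using True k' by (auto intro!: cw_cong)
      finally show ?thesis using True True2 by simp
    next
      case False2: False
      have "wrel n T (Yg i # cw Xg m \<alpha>) (cw Xg m \<alpha> @ [Yg i])"
        using Suc True by simp
      then show ?thesis using True False2 by simp
    qed
  next
    case False
    have "wrel n T (Yg i # cw Xg (Suc m) \<alpha>) ((Yg i # replicate ?k (Xg (Suc m))) @ cw Xg m \<alpha>)"
      by simp (rule wrel_refl, use Suc.prems assms in \<open>auto\<close>)
    also have "wrel n T \<dots> ((replicate ?k (Xg (Suc m)) @ [Yg i]) @ cw Xg m \<alpha>)"
      by (rule wrel_post[OF wrel_rep[OF wYX]]) (use Suc.prems assms False in auto)
    also have "\<dots> = replicate ?k (Xg (Suc m)) @ (Yg i # cw Xg m \<alpha>)" by simp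
    also have "wrel n T \<dots> (replicate ?k (Xg (Suc m)) @
        (if i \<le> m \<and> 0 < \<alpha> i then cw Xg m (\<alpha>(i := \<alpha> i - 1)) else cw Xg m \<alpha> @ [Yg i]))"
      by (rule wrel_pre[OF Suc.IH]) (use Suc.prems in auto)
    also have "\<dots> = (if i \<le> Suc m \<and> 0 < \<alpha> i then cw Xg (Suc m) (\<alpha>(i := \<alpha> i - 1)) else cw Xg (Suc m) \<alpha> @ [Yg i])"
      using False by auto
    finally show ?thesis .
  qed
qed

lemma nf_word:
  "set w \<subseteq> gens n \<Longrightarrow> \<exists>\<alpha> \<beta>. adm n \<alpha> \<and> adm n \<beta> \<and> wrel n (T::'k::field itself) w (cw Xg n \<alpha> @ cw Yg n \<beta>)"
proof (induction w)
  case Nil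
  have "adm n (\<lambda>_. 0)" by (simp add: adm_def)
  moreover have "wrel n T [] (cw Xg n (\<lambda>_. 0) @ cw Yg n (\<lambda>_. 0))" by (simp add: wrel_refl)
  ultimately show ?case by blast
next
  case (Cons g w)
  then obtain \<alpha> \<beta> where ab: "adm n \<alpha>" "adm n \<beta>" "wrel n T w (cw Xg n \<alpha> @ cw Yg n \<beta>)" by auto
  have g: "g \<in> gens n" using Cons by auto
  have 1: "wrel n T (g # w) ((g # cw Xg n \<alpha>) @ cw Yg n \<beta>)" using wrel_cons[OF ab(3) g] by simp
  show ?case
  proof (cases g)
    case (Xg i)
    have i: "i \<in> {1..n}" using g Xg by simp
    have "wrel n T ((Xg i # cw Xg n \<alpha>) @ cw Yg n \<beta>) (cw Xg n (\<alpha>(i := Suc (\<alpha> i))) @ cw Yg n \<beta>)"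
      by (rule wrel_post[OF cw_step[OF wXX]]) (use i in auto)
    then have "wrel n T (g # w) (cw Xg n (\<alpha>(i := Suc (\<alpha> i))) @ cw Yg n \<beta>)"
      using wrel_trans[OF 1] Xg by simp
    moreover have "adm n (\<alpha>(i := Suc (\<alpha> i)))" using ab i by simp
    ultimately show ?thesis using ab by blast
  next
    case (Yg i)
    have i: "i \<in> {1..n}" using g Yg by simp
    have 2: "wrel n T ((Yg i # cw Xg n \<alpha>) @ cw Yg n \<beta>)
      ((if i \<le> n \<and> 0 < \<alpha> i then cw Xg n (\<alpha>(i := \<alpha> i - 1)) else cw Xg n \<alpha> @ [Yg i]) @ cw Yg n \<beta>)"
      by (rule wrel_post[OF Y_past_X]) (use i in auto)
    have h1: "wrel n T (g # w) ((Yg i # cw Xg n \<alpha>) @ cw Yg n \<beta>)" using 1 Yg by simp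
    show ?thesis
    proof (cases "0 < \<alpha> i")
      case True
      with 2 have "wrel n T ((Yg i # cw Xg n \<alpha>) @ cw Yg n \<beta>) (cw Xg n (\<alpha>(i := \<alpha> i - 1)) @ cw Yg n \<beta>)"
        using i by simp
      then have "wrel n T (g # w) (cw Xg n (\<alpha>(i := \<alpha> i - 1)) @ cw Yg n \<beta>)"
        by (rule wrel_trans[OF h1])
      moreover have "adm n (\<alpha>(i := \<alpha> i - 1))" using ab i by simp
      ultimately show ?thesis using ab by blast
    next
      case False
      have 3: "wrel n T (cw Xg n \<alpha> @ (Yg i # cw Yg n \<beta>)) (cw Xg n \<alpha> @ cw Yg n (\<beta>(i := Suc (\<beta> i))))"
        by (rule wrel_pre[OF cw_step[OF wYY]]) (use i in auto)
      from 2 False have "wrel n T ((Yg i # cw Xg n \<alpha>) @ cw Yg n \<beta>) (cw Xg n \<alpha> @ (Yg i # cw Yg n \<beta>))"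
        by simp
      then have "wrel n T (g # w) (cw Xg n \<alpha> @ (Yg i # cw Yg n \<beta>))"
        by (rule wrel_trans[OF h1])
      then have "wrel n T (g # w) (cw Xg n \<alpha> @ cw Yg n (\<beta>(i := Suc (\<beta> i))))"
        by (rule wrel_trans[OF _ 3])
      moreover have "adm n (\<beta>(i := Suc (\<beta> i)))" using ab i by simp
      ultimately show ?thesis using ab by blast
    qed
  qed
qed




lemma wop_rep_X:
  assumes "i \<in> {1..n}"
  shows "wop n (replicate k (Xg i) @ w) v \<gamma> =
     (if k \<le> \<gamma> i then wop n w v (\<gamma>(i := \<gamma> i - k)) else (0::'k::field))"
proof (induction k arbitrary: \<gamma>)
  case 0 then show ?case by simp
next
  case (Suc k)
  show ?case
  proof (cases "adm n \<gamma> \<and> 0 < \<gamma> i")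
    case True
    have "wop n (replicate (Suc k) (Xg i) @ w) v \<gamma> = wop n (replicate k (Xg i) @ w) v (\<gamma>(i := \<gamma> i - 1))"
      using True by (simp add: Xop_def)
    also have "\<dots> = (if k \<le> (\<gamma>(i := \<gamma> i - 1)) i then wop n w v ((\<gamma>(i := \<gamma> i - 1))(i := (\<gamma>(i := \<gamma> i - 1)) i - k)) else 0)"
      by (rule Suc.IH)
    also have "(\<gamma>(i := \<gamma> i - 1))(i := (\<gamma>(i := \<gamma> i - 1)) i - k) = \<gamma>(i := \<gamma> i - Suc k)" by simp
    also have "(k \<le> (\<gamma>(i := \<gamma> i - 1)) i) = (Suc k \<le> \<gamma> i)" using True by auto
    finally show ?thesis .
  next
    case False
    show ?thesis
    proof (cases "adm n \<gamma>")
      case True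
      then have "\<gamma> i = 0" using False by simp
      then show ?thesis using True by (simp add: Xop_def)
    next
      case F2: False
      then have "\<not> adm n (\<gamma>(i := \<gamma> i - Suc k))" using assms by simp
      then show ?thesis using F2 by (simp add: Xop_def wop_nadm)
    qed
  qed
qed

lemma wop_rep_Y:
  assumes "i \<in> {1..n}"
  shows "wop n (replicate k (Yg i) @ w) v \<gamma> = (wop n w v (\<gamma>(i := \<gamma> i + k)) :: 'k::field)"
proof (induction k arbitrary: \<gamma>)
  case 0 then show ?case by simp
next
  case (Suc k)
  show ?case
  proof (cases "adm n \<gamma>")
    case True
    have "wop n (replicate (Suc k) (Yg i) @ w) v \<gamma> = wop n (replicate k (Yg i) @ w) v (\<gamma>(i := Suc (\<gamma> i)))"
      using True by (simp add: Yop_def)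
    also have "\<dots> = wop n w v ((\<gamma>(i := Suc (\<gamma> i)))(i := (\<gamma>(i := Suc (\<gamma> i))) i + k))"
      by (rule Suc.IH)
    also have "(\<gamma>(i := Suc (\<gamma> i)))(i := (\<gamma>(i := Suc (\<gamma> i))) i + k) = \<gamma>(i := \<gamma> i + Suc k)" by simp
    finally show ?thesis .
  next
    case False
    then have "\<not> adm n (\<gamma>(i := \<gamma> i + Suc k))" using assms by simp
    then have h: "wop n w v (\<gamma>(i := \<gamma> i + Suc k)) = 0" by (rule wop_nadm)
    have l: "wop n (replicate (Suc k) (Yg i) @ w) v \<gamma> = 0" using False by (simp add: Yop_def)
    show ?thesis unfolding l h by (rule refl)
  qed
qed

lemma wop_cwX:
  "m \<le> n \<Longrightarrow> wop n (cw Xg m \<alpha> @ w) v \<gamma> =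
     (if (\<forall>i\<in>{1..m}. \<alpha> i \<le> \<gamma> i) then wop n w v (\<lambda>i. if i \<in> {1..m} then \<gamma> i - \<alpha> i else \<gamma> i)
      else (0::'k::field))"
proof (induction m arbitrary: \<gamma>)
  case 0 then show ?case by simp
next
  case (Suc m)
  let ?g = "\<gamma>(Suc m := \<gamma> (Suc m) - \<alpha> (Suc m))"
  have "wop n (cw Xg (Suc m) \<alpha> @ w) v \<gamma> = wop n (replicate (\<alpha> (Suc m)) (Xg (Suc m)) @ (cw Xg m \<alpha> @ w)) v \<gamma>"
    by simp
  also have "\<dots> = (if \<alpha> (Suc m) \<le> \<gamma> (Suc m) then wop n (cw Xg m \<alpha> @ w) v ?g else 0)"
    using Suc.prems by (subst wop_rep_X) auto
  also have "\<dots> = (if \<alpha> (Suc m) \<le> \<gamma> (Suc m) then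
      (if (\<forall>i\<in>{1..m}. \<alpha> i \<le> ?g i) then wop n w v (\<lambda>i. if i \<in> {1..m} then ?g i - \<alpha> i else ?g i) else 0) else 0)"
    using Suc by simp
  also have "\<dots> = (if (\<forall>i\<in>{1..Suc m}. \<alpha> i \<le> \<gamma> i) then wop n w v (\<lambda>i. if i \<in> {1..Suc m} then \<gamma> i - \<alpha> i else \<gamma> i) else 0)"
  proof -
    have e: "(\<lambda>i. if i \<in> {1..m} then ?g i - \<alpha> i else ?g i) = (\<lambda>i. if i \<in> {1..Suc m} then \<gamma> i - \<alpha> i else \<gamma> i)"
      by (auto simp: fun_eq_iff)
    have c: "(\<alpha> (Suc m) \<le> \<gamma> (Suc m) \<and> (\<forall>i\<in>{1..m}. \<alpha> i \<le> ?g i)) = (\<forall>i\<in>{1..Suc m}. \<alpha> i \<le> \<gamma> i)"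
      by (auto simp: le_Suc_eq)
    show ?thesis using e c by (auto simp del: fun_upd_apply)
  qed
  finally show ?case .
qed

lemma wop_cwY:
  "m \<le> n \<Longrightarrow> wop n (cw Yg m \<beta> @ w) v \<gamma> =
     (wop n w v (\<lambda>i. if i \<in> {1..m} then \<gamma> i + \<beta> i else \<gamma> i) :: 'k::field)"
proof (induction m arbitrary: \<gamma>)
  case 0 then show ?case by simp
next
  case (Suc m)
  let ?g = "\<gamma>(Suc m := \<gamma> (Suc m) + \<beta> (Suc m))"
  have "wop n (cw Yg (Suc m) \<beta> @ w) v \<gamma> = wop n (replicate (\<beta> (Suc m)) (Yg (Suc m)) @ (cw Yg m \<beta> @ w)) v \<gamma>"
    by simp
  also have "\<dots> = wop n (cw Yg m \<beta> @ w) v ?g"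
    using Suc.prems by (subst wop_rep_Y) auto
  also have "\<dots> = wop n w v (\<lambda>i. if i \<in> {1..m} then ?g i + \<beta> i else ?g i)"
    using Suc by simp
  also have "(\<lambda>i. if i \<in> {1..m} then ?g i + \<beta> i else ?g i) = (\<lambda>i. if i \<in> {1..Suc m} then \<gamma> i + \<beta> i else \<gamma> i)"
    by (auto simp: fun_eq_iff)
  finally show ?case .
qed

definition Mop :: "nat \<Rightarrow> (nat \<Rightarrow> nat) \<Rightarrow> (nat \<Rightarrow> nat) \<Rightarrow> ('k::field) op" where
  "Mop n \<alpha> \<beta> = wop n (cw Xg n \<alpha> @ cw Yg n \<beta>)"

lemma Mop_formula:
  assumes "adm n \<alpha>" "adm n \<beta>"
  shows "Mop n \<alpha> \<beta> v \<gamma> = (if adm n \<gamma> \<and> (\<forall>i. \<alpha> i \<le> \<gamma> i) then v (\<lambda>i. \<gamma> i - \<alpha> i + \<beta> i) else (0::'k::field))"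
proof -
  let ?g1 = "\<lambda>i. if i \<in> {1..n} then \<gamma> i - \<alpha> i else \<gamma> i"
  let ?g2 = "\<lambda>i. if i \<in> {1..n} then ?g1 i + \<beta> i else ?g1 i"
  have "Mop n \<alpha> \<beta> v \<gamma> = (if (\<forall>i\<in>{1..n}. \<alpha> i \<le> \<gamma> i) then wop n (cw Yg n \<beta>) v ?g1 else 0)"
    unfolding Mop_def by (rule wop_cwX) simp
  also have "wop n (cw Yg n \<beta>) v ?g1 = Rop n v ?g2"
    using wop_cwY[OF order_refl, of n \<beta> "[]" v ?g1] by (simp only: append_Nil2 wop.simps)
  also have "?g2 = (\<lambda>i. \<gamma> i - \<alpha> i + \<beta> i)"
    using assms by (auto simp: fun_eq_iff adm_def)
  finally have e1: "Mop n \<alpha> \<beta> v \<gamma> = (if (\<forall>i\<in>{1..n}. \<alpha> i \<le> \<gamma> i) then Rop n v (\<lambda>i. \<gamma> i - \<alpha> i + \<beta> i) else 0)" .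
  have e2: "adm n (\<lambda>i. \<gamma> i - \<alpha> i + \<beta> i) = adm n \<gamma>"
    using assms by (auto simp: adm_def)
  have e3: "(\<forall>i\<in>{1..n}. \<alpha> i \<le> \<gamma> i) = (\<forall>i. \<alpha> i \<le> \<gamma> i)"
  proof
    assume h: "\<forall>i\<in>{1..n}. \<alpha> i \<le> \<gamma> i"
    show "\<forall>i. \<alpha> i \<le> \<gamma> i"
    proof
      fix i
      show "\<alpha> i \<le> \<gamma> i"
      proof (cases "i \<in> {1..n}")
        case True with h show ?thesis by blast
      next
        case False then have "\<alpha> i = 0" using assms(1) unfolding adm_def by blast
        then show ?thesis by simp
      qed
    qed
  qed auto
  show ?thesis using e1 e2 e3 by (auto simp: Rop_def)
qed

lemma wrel_wop:
  assumes "wrel n (TYPE('k::field)) u w"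
  shows "wop n u v \<gamma> = (wop n w v \<gamma> :: 'k)"
proof -
  have u: "nc_mon u \<in> ncP n" and w: "nc_mon w \<in> ncP n"
    and r: "nc_sub (nc_mon u) (nc_mon w :: 'k ncpoly) \<in> relI n"
    using assms unfolding wrel_def by (auto intro: ncP_mon)
  have "piop n (nc_sub (nc_mon u) (nc_mon w :: 'k ncpoly)) v \<gamma> = 0" by (rule piop_relI[OF r])
  then show ?thesis by (simp add: piop_sub[OF u w] piop_mon)
qed

lemma regroup:
  assumes "finite S"
  shows "(\<Sum>w\<in>S. a w * H (N w)) = (\<Sum>p\<in>N ` S. (\<Sum>w\<in>{w\<in>S. N w = p}. a w) * (H p :: 'k::field))"
  using assms by (subst sum.image_gen[of S _ N]) (auto simp: sum_distrib_right intro!: sum.cong)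

definition nwd :: "nat \<Rightarrow> (nat \<Rightarrow> nat) \<times> (nat \<Rightarrow> nat) \<Rightarrow> gen list" where
  "nwd n p = cw Xg n (fst p) @ cw Yg n (snd p)"

lemma piop_nf:
  assumes f: "(f::'k::field ncpoly) \<in> ncP n"
  shows "\<exists>P c. finite P \<and> (\<forall>p\<in>P. adm n (fst p) \<and> adm n (snd p)) \<and>
     (\<forall>v \<gamma>. piop n f v \<gamma> = (\<Sum>p\<in>P. c p * Mop n (fst p) (snd p) v \<gamma>)) \<and>
     nc_sub f (\<lambda>x. \<Sum>p\<in>P. c p * nc_mon (nwd n p) x) \<in> relI n"
proof -
  define S where "S = {w. f w \<noteq> 0}"
  have S: "finite S" using f unfolding S_def ncP_def by auto
  have Sg: "set w \<subseteq> gens n" if "w \<in> S" for w using f that unfolding S_def ncP_def by auto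
  define N where "N w = (SOME p. adm n (fst p) \<and> adm n (snd p) \<and> wrel n (TYPE('k)) w (nwd n p))" for w
  have N: "adm n (fst (N w)) \<and> adm n (snd (N w)) \<and> wrel n (TYPE('k)) w (nwd n (N w))" if wS: "w \<in> S" for w
  proof -
    obtain \<alpha> \<beta> where "adm n \<alpha>" "adm n \<beta>" "wrel n (TYPE('k)) w (cw Xg n \<alpha> @ cw Yg n \<beta>)"
      using nf_word[OF Sg[OF wS]] by blast
    then have "\<exists>p. adm n (fst p) \<and> adm n (snd p) \<and> wrel n (TYPE('k)) w (nwd n p)"
      by (intro exI[of _ "(\<alpha>, \<beta>)"]) (simp add: nwd_def)
    then show ?thesis unfolding N_def by (rule someI_ex)
  qed
  define P where "P = N ` S"
  define c where "c p = (\<Sum>w\<in>{w\<in>S. N w = p}. f w)" for p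
  have "finite P" using S unfolding P_def by simp
  moreover have "\<forall>p\<in>P. adm n (fst p) \<and> adm n (snd p)" using N unfolding P_def by auto
  moreover have "piop n f v \<gamma> = (\<Sum>p\<in>P. c p * Mop n (fst p) (snd p) v \<gamma>)" for v \<gamma>
  proof -
    have "piop n f v \<gamma> = (\<Sum>w\<in>S. f w * wop n w v \<gamma>)" unfolding piop_def S_def ..
    also have "\<dots> = (\<Sum>w\<in>S. f w * Mop n (fst (N w)) (snd (N w)) v \<gamma>)"
      by (intro sum.cong refl) (simp add: Mop_def wrel_wop[OF N[THEN conjunct2, THEN conjunct2]] nwd_def)
    also have "\<dots> = (\<Sum>p\<in>P. c p * Mop n (fst p) (snd p) v \<gamma>)"
      unfolding P_def c_def by (rule regroup[OF S, where H = "\<lambda>p. Mop n (fst p) (snd p) v \<gamma>"])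
    finally show ?thesis .
  qed
  moreover have "nc_sub f (\<lambda>x. \<Sum>p\<in>P. c p * nc_mon (nwd n p) x) \<in> relI n"
  proof -
    have g: "(\<lambda>x. \<Sum>p\<in>P. c p * nc_mon (nwd n p) x) = (\<lambda>x. \<Sum>w\<in>S. f w * nc_mon (nwd n (N w)) x)"
      unfolding P_def c_def by (rule ext, rule regroup[OF S, symmetric])
    have fs: "f x = (\<Sum>w\<in>S. f w * nc_mon w x)" for x
    proof -
      have "(\<Sum>w\<in>S. f w * nc_mon w x) = (\<Sum>w\<in>S. if w = x then f x else 0)"
        by (intro sum.cong) (auto simp: nc_mon_def)
      also have "\<dots> = f x" using S by (simp add: sum.delta' S_def)
      finally show ?thesis by simp
    qed
    have "nc_sub f (\<lambda>x. \<Sum>w\<in>S. f w * nc_mon (nwd n (N w)) x) =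
        (\<lambda>x. \<Sum>w\<in>S. nc_smult (f w) (nc_sub (nc_mon w) (nc_mon (nwd n (N w)))) x)"
    proof (rule ext)
      fix x
      have "nc_sub f (\<lambda>x. \<Sum>w\<in>S. f w * nc_mon (nwd n (N w)) x) x = f x - (\<Sum>w\<in>S. f w * nc_mon (nwd n (N w)) x)"
        by (simp add: nc_sub_def)
      also have "f x = (\<Sum>w\<in>S. f w * nc_mon w x)" by (rule fs)
      also have "(\<Sum>w\<in>S. f w * nc_mon w x) - (\<Sum>w\<in>S. f w * nc_mon (nwd n (N w)) x)
          = (\<Sum>w\<in>S. nc_smult (f w) (nc_sub (nc_mon w) (nc_mon (nwd n (N w)))) x)"
        by (simp add: nc_sub_def nc_smult_def sum_subtractf[symmetric] algebra_simps)
      finally show "nc_sub f (\<lambda>x. \<Sum>w\<in>S. f w * nc_mon (nwd n (N w)) x) x =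
          (\<lambda>x. \<Sum>w\<in>S. nc_smult (f w) (nc_sub (nc_mon w) (nc_mon (nwd n (N w)))) x) x" by simp
    qed
    also have "\<dots> \<in> relI n"
      using N S unfolding wrel_def by (intro relI_sum relI.rel_smult) auto
    finally show ?thesis using g by simp
  qed
  ultimately show ?thesis by blast
qed

definition dl :: "(nat \<Rightarrow> nat) \<Rightarrow> ('k::field) vec" where
  "dl \<mu> = (\<lambda>\<gamma>. if \<gamma> = \<mu> then 1 else 0)"

lemma indep:
  assumes P: "finite P" "\<forall>p\<in>P. adm n (fst p) \<and> adm n (snd p)"
    and z: "\<And>\<mu> \<gamma>. adm n \<mu> \<Longrightarrow> adm n \<gamma> \<Longrightarrow> (\<Sum>p\<in>P. c p * Mop n (fst p) (snd p) (dl \<mu>) \<gamma>) = (0::'k::field)"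
  shows "\<forall>p\<in>P. c p = 0"
proof (rule ccontr)
  assume nt: "\<not> (\<forall>p\<in>P. c p = 0)"
  define P' where "P' = {p\<in>P. c p \<noteq> 0}"
  have P'ne: "P' \<noteq> {}" and P'fin: "finite P'" using nt P unfolding P'_def by auto
  define sz where "sz p = (\<Sum>i\<in>{1..n}. snd p i)" for p :: "(nat \<Rightarrow> nat) \<times> (nat \<Rightarrow> nat)"
  have "Min (sz ` P') \<in> sz ` P'" using P'ne P'fin by (intro Min_in) auto
  then obtain p0 where p0: "p0 \<in> P'" "sz p0 = Min (sz ` P')" by auto
  have p0min: "sz p0 \<le> sz q" if "q \<in> P'" for q using p0(2) P'fin that by simp
  obtain \<alpha>0 \<beta>0 where ab0: "p0 = (\<alpha>0, \<beta>0)" by (cases p0)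
  have adm0: "adm n \<alpha>0" "adm n \<beta>0" using p0 P unfolding P'_def ab0 by auto
  have c0: "c p0 \<noteq> 0" using p0 unfolding P'_def by auto
  have tm: "c p * Mop n (fst p) (snd p) (dl \<beta>0) \<alpha>0 = (if p = p0 then c p0 else 0)" if pP: "p \<in> P" for p
  proof (cases "c p = 0")
    case True then show ?thesis using c0 by auto
  next
    case False
    obtain \<alpha> \<beta> where ab: "p = (\<alpha>, \<beta>)" by (cases p)
    have adm: "adm n \<alpha>" "adm n \<beta>" using P pP ab by auto
    have pP': "p \<in> P'" using pP False unfolding P'_def by auto
    show ?thesis
    proof (cases "p = p0")
      case True
      then show ?thesis using adm0 by (simp add: ab0 Mop_formula dl_def)
    next
      case False
      have "Mop n \<alpha> \<beta> (dl \<beta>0) \<alpha>0 = (0::'k)"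
      proof (rule ccontr)
        assume nz: "Mop n \<alpha> \<beta> (dl \<beta>0) \<alpha>0 \<noteq> (0::'k)"
        then have le: "\<forall>i. \<alpha> i \<le> \<alpha>0 i" and eq: "(\<lambda>i. \<alpha>0 i - \<alpha> i + \<beta> i) = \<beta>0"
          using adm by (auto simp: Mop_formula dl_def split: if_splits)
        have bl: "\<beta> i \<le> \<beta>0 i" for i using fun_cong[OF eq, of i] by auto
        show False
        proof (cases "\<beta> = \<beta>0")
          case True
          have "\<alpha> = \<alpha>0"
          proof (rule ext)
            fix i
            have "\<alpha>0 i - \<alpha> i + \<beta> i = \<beta>0 i" using fun_cong[OF eq, of i] by simp
            with True le[rule_format, of i] show "\<alpha> i = \<alpha>0 i" by simp
          qed
          then show False using \<open>p \<noteq> p0\<close> True ab ab0 by simp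
        next
          case False
          then obtain i where i: "\<beta> i \<noteq> \<beta>0 i" by auto
          have "i \<in> {1..n}"
          proof (rule ccontr)
            assume "i \<notin> {1..n}"
            then have "\<beta> i = 0" "\<beta>0 i = 0" using adm adm0 unfolding adm_def by auto
            with i show False by simp
          qed
          moreover have "\<beta> i < \<beta>0 i" using bl[of i] i by simp
          ultimately have "sz p < sz p0"
            unfolding sz_def ab ab0 by (intro sum_strict_mono_ex1) (auto simp: bl)
          with p0min[OF pP'] show False by simp
        qed
      qed
      then show ?thesis using False ab by simp
    qed
  qed
  have "(\<Sum>p\<in>P. c p * Mop n (fst p) (snd p) (dl \<beta>0) \<alpha>0) = (\<Sum>p\<in>P. if p = p0 then c p0 else 0)"
    by (intro sum.cong refl tm)
  also have "\<dots> = c p0" using p0 P unfolding P'_def by (simp add: sum.delta')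
  finally show False using z[OF adm0(2) adm0(1)] c0 by simp
qed

lemma faithful:
  assumes f: "f \<in> ncP n" and z: "\<And>v \<gamma>. piop n f v \<gamma> = (0::'k::field)"
  shows "f \<in> relI n"
proof -
  obtain P c where P: "finite P" "\<forall>p\<in>P. adm n (fst p) \<and> adm n (snd p)"
    and e: "\<forall>v \<gamma>. piop n f v \<gamma> = (\<Sum>p\<in>P. c p * Mop n (fst p) (snd p) v \<gamma>)"
    and r: "nc_sub f (\<lambda>x. \<Sum>p\<in>P. c p * nc_mon (nwd n p) x) \<in> relI n"
    using piop_nf[OF f] by blast
  have "\<forall>p\<in>P. c p = 0" by (rule indep[OF P]) (use e z in auto)
  then have "(\<lambda>x. \<Sum>p\<in>P. c p * nc_mon (nwd n p) x) = (\<lambda>x. 0)" by auto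
  with r show ?thesis by (simp add: nc_sub_def)
qed




definition addop :: "('k::field) op \<Rightarrow> 'k op \<Rightarrow> 'k op" where
  "addop a b = (\<lambda>v \<gamma>. a v \<gamma> + b v \<gamma>)"
definition smop :: "'k::field \<Rightarrow> 'k op \<Rightarrow> 'k op" where
  "smop c a = (\<lambda>v \<gamma>. c * a v \<gamma>)"
definition zop :: "('k::field) op" where
  "zop = (\<lambda>v \<gamma>. 0)"

definition Aset :: "nat \<Rightarrow> ('k::field) op set" where
  "Aset n = piop n ` ncP n"

lemma A_add: "a \<in> Aset n \<Longrightarrow> b \<in> Aset n \<Longrightarrow> addop a b \<in> Aset n"
proof -
  assume "a \<in> Aset n" "b \<in> Aset n"
  then obtain f g where f: "f \<in> ncP n" "a = piop n f" and g: "g \<in> ncP n" "b = piop n g"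
    unfolding Aset_def by auto
  have "addop a b = piop n (nc_add f g)" using f g by (auto simp: addop_def piop_add fun_eq_iff)
  then show ?thesis using f g ncP_add unfolding Aset_def by auto
qed

lemma A_smult: "a \<in> Aset n \<Longrightarrow> smop c a \<in> Aset n"
proof -
  assume "a \<in> Aset n"
  then obtain f where f: "f \<in> ncP n" "a = piop n f" unfolding Aset_def by auto
  have "smop c a = piop n (nc_smult c f)" using f by (auto simp: smop_def piop_smult fun_eq_iff)
  then show ?thesis using f ncP_smult unfolding Aset_def by auto
qed

lemma A_comp: "a \<in> Aset n \<Longrightarrow> b \<in> Aset n \<Longrightarrow> a \<circ> b \<in> Aset n"
proof -
  assume "a \<in> Aset n" "b \<in> Aset n"
  then obtain f g where f: "f \<in> ncP n" "a = piop n f" and g: "g \<in> ncP n" "b = piop n g"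
    unfolding Aset_def by auto
  have "a \<circ> b = piop n (nc_mult f g)" unfolding f(2) g(2) by (auto simp: piop_mult fun_eq_iff f g)
  then show ?thesis using f g ncP_mult unfolding Aset_def by auto
qed

lemma A_wop: "set w \<subseteq> gens n \<Longrightarrow> wop n w \<in> Aset n"
  unfolding Aset_def using piop_mon[of n w] ncP_mon[of w n] by (metis image_eqI)

lemma A_R: "Rop n \<in> Aset n"
  using A_wop[of "[]" n] by simp

lemma A_zero: "zop \<in> Aset n"
proof -
  have "zop = piop n (\<lambda>w. 0)" by (auto simp: zop_def piop_zero fun_eq_iff)
  then show ?thesis using ncP_zero unfolding Aset_def by auto
qed

lemma Xop_R: "i \<in> {1..n} \<Longrightarrow> Xop n i \<circ> Rop n = Xop n i" and Yop_R: "i \<in> {1..n} \<Longrightarrow> Yop n i \<circ> Rop n = Yop n i"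
  by (auto simp: fun_eq_iff Xop_def Yop_def Rop_def)

lemma wop_X: "i \<in> {1..n} \<Longrightarrow> wop n [Xg i] = Xop n i" using Xop_R by simp
lemma wop_Y: "i \<in> {1..n} \<Longrightarrow> wop n [Yg i] = Yop n i" using Yop_R by simp

lemma A_X: "i \<in> {1..n} \<Longrightarrow> Xop n i \<in> Aset n"
proof -
  assume i: "i \<in> {1..n}"
  have "wop n [Xg i] \<in> Aset n" by (rule A_wop) (use i in simp)
  then show ?thesis by (simp only: wop_X[OF i])
qed
lemma A_Y: "i \<in> {1..n} \<Longrightarrow> Yop n i \<in> Aset n"
proof -
  assume i: "i \<in> {1..n}"
  have "wop n [Yg i] \<in> Aset n" by (rule A_wop) (use i in simp)
  then show ?thesis by (simp only: wop_Y[OF i])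
qed

lemma A_Mop: "Mop n \<alpha> \<beta> \<in> Aset n"
  unfolding Mop_def by (rule A_wop) simp

lemma A_nf:
  assumes "(a::'k::field op) \<in> Aset n"
  shows "\<exists>P c. finite P \<and> (\<forall>p\<in>P. adm n (fst p) \<and> adm n (snd p)) \<and>
     a = (\<lambda>v \<gamma>. \<Sum>p\<in>P. c p * Mop n (fst p) (snd p) v \<gamma>)"
proof -
  obtain f where f: "f \<in> ncP n" "a = piop n f" using assms unfolding Aset_def by auto
  then show ?thesis using piop_nf[OF f(1)] by (auto simp: fun_eq_iff)
qed

lemma A_lin:
  assumes "a \<in> Aset n"
  shows "a (\<lambda>\<gamma>. \<Sum>b\<in>B. c b * u b \<gamma>) \<gamma>' = (\<Sum>b\<in>B. c b * a (u b) \<gamma>')"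
  using assms piop_lin unfolding Aset_def by auto

lemma A_add_vec:
  assumes "a \<in> Aset n"
  shows "a (\<lambda>\<gamma>. u \<gamma> + w \<gamma>) \<gamma>' = a u \<gamma>' + a w \<gamma>'"
  using A_lin[OF assms, where B="{0::nat,1}" and c="\<lambda>_. 1" and u="\<lambda>b. if b = 0 then u else w" and \<gamma>'=\<gamma>'] by simp

lemma A_smult_vec:
  assumes "a \<in> Aset n"
  shows "a (\<lambda>\<gamma>. k * u \<gamma>) \<gamma>' = k * a u \<gamma>'"
  using A_lin[OF assms, where B="{0::nat}" and c="\<lambda>_. k" and u="\<lambda>_. u" and \<gamma>'=\<gamma>'] by simp

lemma A_zero_vec:
  assumes "(a::'k::field op) \<in> Aset n"
  shows "a (\<lambda>\<gamma>. 0) \<gamma>' = 0"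
  using A_lin[OF assms, where B="{}::nat set" and c="\<lambda>_. 0" and u="\<lambda>_. \<lambda>_. 0" and \<gamma>'=\<gamma>'] by simp

lemma A_nadm:
  assumes "a \<in> Aset n" "\<not> adm n \<gamma>"
  shows "a v \<gamma> = 0"
  using assms unfolding Aset_def piop_def by (auto simp: wop_nadm)

lemma A_zero_test:
  assumes a: "(a::'k::field op) \<in> Aset n" and z: "\<And>\<mu> \<gamma>. adm n \<mu> \<Longrightarrow> a (dl \<mu>) \<gamma> = 0"
  shows "a = zop"
proof -
  obtain P c where P: "finite P" "\<forall>p\<in>P. adm n (fst p) \<and> adm n (snd p)"
    and e: "a = (\<lambda>v \<gamma>. \<Sum>p\<in>P. c p * Mop n (fst p) (snd p) v \<gamma>)"
    using A_nf[OF a] by blast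
  have "\<forall>p\<in>P. c p = 0" by (rule indep[OF P]) (use e z in auto)
  then show ?thesis unfolding e zop_def by auto
qed

lemma A_eq_test:
  assumes a: "(a::'k::field op) \<in> Aset n" and b: "b \<in> Aset n"
    and z: "\<And>\<mu> \<gamma>. adm n \<mu> \<Longrightarrow> a (dl \<mu>) \<gamma> = b (dl \<mu>) \<gamma>"
  shows "a = b"
proof -
  have m: "addop a (smop (-1) b) \<in> Aset n" by (intro A_add A_smult a b)
  have "addop a (smop (-1) b) = zop"
    by (rule A_zero_test[OF m]) (simp add: addop_def smop_def z)
  then have h: "a v \<gamma> + -1 * b v \<gamma> = 0" for v \<gamma>
    unfolding addop_def smop_def zop_def by (metis (no_types, lifting))
  show ?thesis
  proof (intro ext)
    fix v \<gamma> show "a v \<gamma> = b v \<gamma>" using h[of v \<gamma>] by (simp add: algebra_simps)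
  qed
qed

definition Pi :: "nat \<Rightarrow> ('k::field) ncpoly set \<Rightarrow> 'k op" where
  "Pi n A = piop n (SOME a. a \<in> A)"

lemma Sn_cls: "f \<in> ncP n \<Longrightarrow> Sn_class n f \<in> Sn n"
  unfolding Sn_def Sn_class_def by (rule quotientI)

lemma Sn_elem: "A \<in> Sn n \<Longrightarrow> \<exists>f\<in>ncP n. A = Sn_class n f"
  unfolding Sn_def Sn_class_def by (auto elim: quotientE)

lemma cls_mem: "f \<in> ncP n \<Longrightarrow> f \<in> Sn_class n f"
  unfolding Sn_class_def by (auto simp: Srel_def relI_sub_self)

lemma cls_rel: "g \<in> Sn_class n f \<Longrightarrow> g \<in> ncP n \<and> nc_sub f g \<in> relI n"
  unfolding Sn_class_def Srel_def by auto

lemma some_in: "A \<in> Sn n \<Longrightarrow> (SOME a. a \<in> A) \<in> A \<and> (SOME a. a \<in> A) \<in> ncP n"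
proof -
  assume "A \<in> Sn n"
  then obtain f where f: "f \<in> ncP n" "A = Sn_class n f" using Sn_elem by blast
  then have "f \<in> A" using cls_mem by simp
  then have "(SOME a. a \<in> A) \<in> A" using someI[of "\<lambda>a. a \<in> A" f] by blast
  then show ?thesis using f cls_rel by blast
qed

lemma Pi_cls: "f \<in> ncP n \<Longrightarrow> Pi n (Sn_class n f) = piop n f"
proof -
  assume f: "f \<in> ncP n"
  then have s: "(SOME a. a \<in> Sn_class n f) \<in> Sn_class n f" using some_in Sn_cls by blast
  then have a: "(SOME a. a \<in> Sn_class n f) \<in> ncP n"
    and r: "nc_sub f (SOME a. a \<in> Sn_class n f) \<in> relI n" using cls_rel by auto
  show ?thesis unfolding Pi_def
    using piop_relI[OF r] by (auto simp: fun_eq_iff piop_sub[OF f a])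
qed

lemma Pi_inj: "inj_on (Pi n :: ('k::field) ncpoly set \<Rightarrow> 'k op) (Sn n)"
proof (rule inj_onI)
  fix A B :: "'k ncpoly set"
  assume A: "A \<in> Sn n" and B: "B \<in> Sn n" and e: "Pi n A = Pi n B"
  obtain f where f: "f \<in> ncP n" "A = Sn_class n f" using Sn_elem[OF A] by blast
  obtain g where g: "g \<in> ncP n" "B = Sn_class n g" using Sn_elem[OF B] by blast
  have "piop n f = piop n g" using e f g by (simp add: Pi_cls)
  then have "\<And>v \<gamma>. piop n (nc_sub f g) v \<gamma> = 0" by (simp add: piop_sub f g)
  then have "nc_sub f g \<in> relI n" by (rule faithful[OF ncP_sub[OF f(1) g(1)]])
  then have "(f, g) \<in> Srel n" using f g unfolding Srel_def by auto
  then show "A = B" using f g unfolding Sn_class_def by (simp add: equiv_class_eq[OF equiv_Srel])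
qed

lemma Pi_img: "Pi n ` Sn n = Aset n"
proof
  show "Pi n ` Sn n \<subseteq> Aset n" unfolding Aset_def using some_in by (auto simp: Pi_def)
  show "Aset n \<subseteq> Pi n ` Sn n"
  proof
    fix a assume "a \<in> Aset n"
    then obtain f where "f \<in> ncP n" "a = piop n f" unfolding Aset_def by auto
    then show "a \<in> Pi n ` Sn n" using Sn_cls Pi_cls by (metis image_eqI)
  qed
qed

lemma Sn_add_in: "A \<in> Sn n \<Longrightarrow> B \<in> Sn n \<Longrightarrow> Sn_add n A B \<in> Sn n"
  unfolding Sn_add_def by (intro Sn_cls ncP_add) (auto dest: some_in)
lemma Sn_mult_in: "A \<in> Sn n \<Longrightarrow> B \<in> Sn n \<Longrightarrow> Sn_mult n A B \<in> Sn n"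
  unfolding Sn_mult_def by (intro Sn_cls ncP_mult) (auto dest: some_in)
lemma Sn_smult_in: "A \<in> Sn n \<Longrightarrow> Sn_smult n c A \<in> Sn n"
  unfolding Sn_smult_def by (intro Sn_cls ncP_smult) (auto dest: some_in)

lemma Pi_add: "A \<in> Sn n \<Longrightarrow> B \<in> Sn n \<Longrightarrow> Pi n (Sn_add n A B) = addop (Pi n A) (Pi n B)"
proof -
  assume A: "A \<in> Sn n" and B: "B \<in> Sn n"
  have a: "(SOME a. a \<in> A) \<in> ncP n" and b: "(SOME a. a \<in> B) \<in> ncP n" using some_in A B by blast+
  show ?thesis unfolding Sn_add_def
    by (subst Pi_cls) (auto intro!: ncP_add a b simp: piop_add[OF a b] Pi_def addop_def fun_eq_iff)
qed
lemma Pi_mult: "A \<in> Sn n \<Longrightarrow> B \<in> Sn n \<Longrightarrow> Pi n (Sn_mult n A B) = Pi n A \<circ> Pi n B"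
proof -
  assume A: "A \<in> Sn n" and B: "B \<in> Sn n"
  have a: "(SOME a. a \<in> A) \<in> ncP n" and b: "(SOME a. a \<in> B) \<in> ncP n" using some_in A B by blast+
  show ?thesis unfolding Sn_mult_def
    by (subst Pi_cls) (auto intro!: ncP_mult a b simp: piop_mult[OF a b] Pi_def fun_eq_iff)
qed
lemma Pi_smult: "A \<in> Sn n \<Longrightarrow> Pi n (Sn_smult n c A) = smop c (Pi n A)"
proof -
  assume A: "A \<in> Sn n"
  have a: "(SOME a. a \<in> A) \<in> ncP n" using some_in A by blast
  show ?thesis unfolding Sn_smult_def
    by (subst Pi_cls) (auto intro!: ncP_smult a simp: piop_smult[OF a] Pi_def smop_def fun_eq_iff)
qed
lemma Pi_one: "Pi n (Sn_one n) = Rop n"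
  unfolding Sn_one_def by (subst Pi_cls) (auto intro!: ncP_mon simp: piop_mon)
lemma Pi_x: "i \<in> {1..n} \<Longrightarrow> Pi n (Sn_x n i) = Xop n i"
  unfolding Sn_x_def by (subst Pi_cls) (auto intro!: ncP_mon simp: piop_mon Xop_R)
lemma Pi_y: "i \<in> {1..n} \<Longrightarrow> Pi n (Sn_y n i) = Yop n i"
  unfolding Sn_y_def by (subst Pi_cls) (auto intro!: ncP_mon simp: piop_mon Yop_R)
lemma Sn_x_in: "i \<in> {1..n} \<Longrightarrow> Sn_x n i \<in> Sn n"
  unfolding Sn_x_def by (intro Sn_cls ncP_mon) auto
lemma Sn_y_in: "i \<in> {1..n} \<Longrightarrow> Sn_y n i \<in> Sn n"
  unfolding Sn_y_def by (intro Sn_cls ncP_mon) auto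




definition OA :: "nat \<Rightarrow> (('k::field) op \<Rightarrow> 'k op) \<Rightarrow> bool" where
  "OA n \<rho> \<longleftrightarrow> bij_betw \<rho> (Aset n) (Aset n) \<and>
     (\<forall>a\<in>Aset n. \<forall>b\<in>Aset n. \<rho> (addop a b) = addop (\<rho> a) (\<rho> b)) \<and>
     (\<forall>a\<in>Aset n. \<forall>b\<in>Aset n. \<rho> (a \<circ> b) = \<rho> a \<circ> \<rho> b) \<and>
     (\<forall>c. \<forall>a\<in>Aset n. \<rho> (smop c a) = smop c (\<rho> a)) \<and>
     \<rho> (Rop n) = Rop n"

lemma OA_in: "OA n \<rho> \<Longrightarrow> a \<in> Aset n \<Longrightarrow> \<rho> a \<in> Aset n"
  unfolding OA_def bij_betw_def by auto

lemma OA_inj: "OA n \<rho> \<Longrightarrow> a \<in> Aset n \<Longrightarrow> b \<in> Aset n \<Longrightarrow> \<rho> a = \<rho> b \<Longrightarrow> a = b"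
  unfolding OA_def bij_betw_def inj_on_def by blast

lemma OA_add: "OA n \<rho> \<Longrightarrow> a \<in> Aset n \<Longrightarrow> b \<in> Aset n \<Longrightarrow> \<rho> (addop a b) = addop (\<rho> a) (\<rho> b)"
  and OA_comp: "OA n \<rho> \<Longrightarrow> a \<in> Aset n \<Longrightarrow> b \<in> Aset n \<Longrightarrow> \<rho> (a \<circ> b) = \<rho> a \<circ> \<rho> b"
  and OA_smult: "OA n \<rho> \<Longrightarrow> a \<in> Aset n \<Longrightarrow> \<rho> (smop c a) = smop c (\<rho> a)"
  and OA_R: "OA n \<rho> \<Longrightarrow> \<rho> (Rop n) = Rop n"
  unfolding OA_def by auto

lemma OA_inv:
  fixes \<rho> :: "('k::field) op \<Rightarrow> 'k op"
  assumes "OA n \<rho>"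
  shows "OA n (inv_into (Aset n) \<rho>)"
proof -
  let ?i = "inv_into (Aset n) \<rho>"
  have bij: "bij_betw \<rho> (Aset n) (Aset n)" using assms unfolding OA_def by auto
  have bi: "bij_betw ?i (Aset n) (Aset n)" by (rule bij_betw_inv_into[OF bij])
  have ii: "?i (\<rho> a) = a" if "a \<in> Aset n" for a
    using bij that by (simp add: bij_betw_def inv_into_f_f)
  have ri: "\<rho> (?i a) = a" if "a \<in> Aset n" for a
    using bij that by (simp add: bij_betw_def f_inv_into_f)
  have iin: "?i a \<in> Aset n" if "a \<in> Aset n" for a using bi that unfolding bij_betw_def by auto
  have gen: "?i (F a b) = F' (?i a) (?i b)" if "a \<in> Aset n" "b \<in> Aset n"
    and h: "\<And>x y. x \<in> Aset n \<Longrightarrow> y \<in> Aset n \<Longrightarrow> \<rho> (F' x y) = F (\<rho> x) (\<rho> y)"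
    and cl: "\<And>x y. x \<in> Aset n \<Longrightarrow> y \<in> Aset n \<Longrightarrow> F' x y \<in> Aset n" for F F' a b
  proof -
    have "F a b = F (\<rho> (?i a)) (\<rho> (?i b))" using that ri by simp
    also have "\<dots> = \<rho> (F' (?i a) (?i b))" using h iin that by simp
    finally have eq: "F a b = \<rho> (F' (?i a) (?i b))" .
    show ?thesis unfolding eq by (rule ii[OF cl[OF iin iin]]) (use that in auto)
  qed
  show ?thesis unfolding OA_def
  proof (intro conjI ballI allI)
    show "bij_betw ?i (Aset n) (Aset n)" by (rule bi)
  next
    fix a b :: "'k op" assume a: "a \<in> Aset n" and b: "b \<in> Aset n"
    show "?i (addop a b) = addop (?i a) (?i b)"
      by (rule gen[where F=addop and F'=addop, OF a b OA_add[OF assms] A_add])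
  next
    fix a b :: "'k op" assume a: "a \<in> Aset n" and b: "b \<in> Aset n"
    show "?i (a \<circ> b) = ?i a \<circ> ?i b"
      by (rule gen[where F="(\<circ>)" and F'="(\<circ>)", OF a b OA_comp[OF assms] A_comp])
  next
    fix c and a :: "'k op" assume a: "a \<in> Aset n"
    have "smop c a = smop c (\<rho> (?i a))" using ri a by simp
    also have "\<dots> = \<rho> (smop c (?i a))" using OA_smult[OF assms iin[OF a]] by simp
    finally have eq: "smop c a = \<rho> (smop c (?i a))" .
    show "?i (smop c a) = smop c (?i a)" unfolding eq by (rule ii[OF A_smult[OF iin[OF a]]])
  next
    show "?i (Rop n) = Rop n" using ii[OF A_R] OA_R[OF assms] by simp
  qed
qed

lemma OA_compose:
  fixes \<rho> \<rho>' :: "('k::field) op \<Rightarrow> 'k op"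
  assumes r: "OA n \<rho>" and r': "OA n \<rho>'"
  shows "OA n (\<rho> \<circ> \<rho>')"
  unfolding OA_def
proof (intro conjI ballI allI)
  show "bij_betw (\<rho> \<circ> \<rho>') (Aset n) (Aset n)"
    using r r' unfolding OA_def by (auto intro: bij_betw_trans)
next
  fix a b :: "'k op" assume "a \<in> Aset n" "b \<in> Aset n"
  then show "(\<rho> \<circ> \<rho>') (addop a b) = addop ((\<rho> \<circ> \<rho>') a) ((\<rho> \<circ> \<rho>') b)"
    using OA_add[OF r] OA_add[OF r'] OA_in[OF r'] by simp
next
  fix a b :: "'k op" assume "a \<in> Aset n" "b \<in> Aset n"
  then show "(\<rho> \<circ> \<rho>') (a \<circ> b) = (\<rho> \<circ> \<rho>') a \<circ> (\<rho> \<circ> \<rho>') b"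
    using OA_comp[OF r] OA_comp[OF r'] OA_in[OF r'] by simp
next
  fix c and a :: "'k op" assume "a \<in> Aset n"
  then show "(\<rho> \<circ> \<rho>') (smop c a) = smop c ((\<rho> \<circ> \<rho>') a)"
    using OA_smult[OF r] OA_smult[OF r'] OA_in[OF r'] by simp
next
  show "(\<rho> \<circ> \<rho>') (Rop n) = Rop n" using OA_R[OF r] OA_R[OF r'] by simp
qed

lemma OA_Sn:
  fixes \<sigma> :: "('k::field) ncpoly set \<Rightarrow> 'k ncpoly set"
  assumes "Sn_aut n \<sigma>"
  shows "OA n (\<lambda>a. Pi n (\<sigma> (inv_into (Sn n) (Pi n) a)))"
proof -
  let ?iP = "inv_into (Sn n) (Pi n)"
  have bP: "bij_betw (Pi n) (Sn n) (Aset n)" using Pi_inj Pi_img unfolding bij_betw_def by blast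
  have bs: "bij_betw \<sigma> (Sn n) (Sn n)" using assms unfolding Sn_aut_def by auto
  have biP: "bij_betw ?iP (Aset n) (Sn n)" by (rule bij_betw_inv_into[OF bP])
  have iP: "?iP (Pi n A) = A" if "A \<in> Sn n" for A by (rule inv_into_f_f[OF Pi_inj that])
  have Pi_i: "Pi n (?iP a) = a" if "a \<in> Aset n" for a
  proof -
    have "a \<in> Pi n ` Sn n" unfolding Pi_img using that .
    then show ?thesis by (rule f_inv_into_f)
  qed
  have iPin: "?iP a \<in> Sn n" if "a \<in> Aset n" for a using biP that unfolding bij_betw_def by auto
  have sin: "\<sigma> A \<in> Sn n" if "A \<in> Sn n" for A using bs that unfolding bij_betw_def by auto
  have sadd: "\<sigma> (Sn_add n A B) = Sn_add n (\<sigma> A) (\<sigma> B)" if "A \<in> Sn n" "B \<in> Sn n" for A B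
    using assms that unfolding Sn_aut_def by auto
  have smul: "\<sigma> (Sn_mult n A B) = Sn_mult n (\<sigma> A) (\<sigma> B)" if "A \<in> Sn n" "B \<in> Sn n" for A B
    using assms that unfolding Sn_aut_def by auto
  have ssm: "\<sigma> (Sn_smult n c A) = Sn_smult n c (\<sigma> A)" if "A \<in> Sn n" for A c
    using assms that unfolding Sn_aut_def by auto
  have sone: "\<sigma> (Sn_one n) = Sn_one n" using assms unfolding Sn_aut_def by auto
  show ?thesis unfolding OA_def
  proof (intro conjI ballI allI)
    show "bij_betw (\<lambda>a. Pi n (\<sigma> (?iP a))) (Aset n) (Aset n)"
      using bij_betw_trans[OF bij_betw_trans[OF biP bs] bP] by (simp add: comp_def)
  next
    fix a b :: "'k op" assume a: "a \<in> Aset n" and b: "b \<in> Aset n"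
    have eqx: "addop a b = Pi n (Sn_add n (?iP a) (?iP b))" using Pi_add[OF iPin[OF a] iPin[OF b]] Pi_i[OF a] Pi_i[OF b] by simp
    have "?iP (addop a b) = Sn_add n (?iP a) (?iP b)" unfolding eqx by (rule iP[OF Sn_add_in[OF iPin[OF a] iPin[OF b]]])
    then show "Pi n (\<sigma> (?iP (addop a b))) = addop (Pi n (\<sigma> (?iP a))) (Pi n (\<sigma> (?iP b)))"
      using sadd[OF iPin[OF a] iPin[OF b]] Pi_add[OF sin[OF iPin[OF a]] sin[OF iPin[OF b]]] by simp
  next
    fix a b :: "'k op" assume a: "a \<in> Aset n" and b: "b \<in> Aset n"
    have eqx: "a \<circ> b = Pi n (Sn_mult n (?iP a) (?iP b))" using Pi_mult[OF iPin[OF a] iPin[OF b]] Pi_i[OF a] Pi_i[OF b] by simp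
    have "?iP (a \<circ> b) = Sn_mult n (?iP a) (?iP b)" unfolding eqx by (rule iP[OF Sn_mult_in[OF iPin[OF a] iPin[OF b]]])
    then show "Pi n (\<sigma> (?iP (a \<circ> b))) = Pi n (\<sigma> (?iP a)) \<circ> Pi n (\<sigma> (?iP b))"
      using smul[OF iPin[OF a] iPin[OF b]] Pi_mult[OF sin[OF iPin[OF a]] sin[OF iPin[OF b]]] by simp
  next
    fix c and a :: "'k op" assume a: "a \<in> Aset n"
    have eqx: "smop c a = Pi n (Sn_smult n c (?iP a))" using Pi_smult[OF iPin[OF a]] Pi_i[OF a] by simp
    have "?iP (smop c a) = Sn_smult n c (?iP a)" unfolding eqx by (rule iP[OF Sn_smult_in[OF iPin[OF a]]])
    then show "Pi n (\<sigma> (?iP (smop c a))) = smop c (Pi n (\<sigma> (?iP a)))"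
      using ssm[OF iPin[OF a]] Pi_smult[OF sin[OF iPin[OF a]]] by simp
  next
    have "(Sn_one n :: 'k ncpoly set) \<in> Sn n" unfolding Sn_one_def by (intro Sn_cls ncP_mon) auto
    then have "?iP (Pi n (Sn_one n :: 'k ncpoly set)) = Sn_one n" by (rule iP)
    then have "?iP (Rop n :: 'k op) = Sn_one n" by (simp only: Pi_one)
    then show "Pi n (\<sigma> (?iP (Rop n))) = Rop n" using Pi_one sone by simp
  qed
qed

lemma OA_zero:
  assumes "OA n \<rho>"
  shows "\<rho> zop = zop"
proof -
  have "\<rho> (addop zop zop) = addop (\<rho> zop) (\<rho> zop)" by (rule OA_add[OF assms A_zero A_zero])
  moreover have "addop zop zop = (zop::'a op)" by (simp add: addop_def zop_def)
  ultimately have "\<rho> zop = addop (\<rho> zop) (\<rho> zop)" by simp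
  then have eq: "\<rho> zop = addop (\<rho> zop) (\<rho> zop)" .
  have "\<rho> zop v \<gamma> = 0" for v \<gamma>
  proof -
    have "\<rho> zop v \<gamma> = addop (\<rho> zop) (\<rho> zop) v \<gamma>" by (metis eq)
    then have "\<rho> zop v \<gamma> = \<rho> zop v \<gamma> + \<rho> zop v \<gamma>" by (simp only: addop_def)
    then show ?thesis by (simp only: add_cancel_right_right)
  qed
  then show ?thesis unfolding zop_def by (intro ext) simp
qed

lemma osum_in:
  assumes "finite P" "\<And>p. p \<in> P \<Longrightarrow> F p \<in> Aset n"
  shows "(\<lambda>v \<gamma>. \<Sum>p\<in>P. c p * F p v \<gamma>) \<in> Aset n"
  using assms
proof (induction P rule: finite_induct)
  case empty then show ?case using A_zero by (simp add: zop_def)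
next
  case (insert x P)
  have "(\<lambda>v \<gamma>. \<Sum>p\<in>insert x P. c p * F p v \<gamma>) = addop (smop (c x) (F x)) (\<lambda>v \<gamma>. \<Sum>p\<in>P. c p * F p v \<gamma>)"
    using insert by (simp add: addop_def smop_def)
  then show ?case using insert by (auto intro!: A_add A_smult)
qed

lemma OA_osum:
  assumes "OA n \<rho>" "finite P" "\<And>p. p \<in> P \<Longrightarrow> F p \<in> Aset n"
  shows "\<rho> (\<lambda>v \<gamma>. \<Sum>p\<in>P. c p * F p v \<gamma>) = (\<lambda>v \<gamma>. \<Sum>p\<in>P. c p * \<rho> (F p) v \<gamma>)"
  using assms(2,3)
proof (induction P rule: finite_induct)
  case empty then show ?case using OA_zero[OF assms(1)] by (simp add: zop_def)
next
  case (insert x P)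
  have e: "(\<lambda>v \<gamma>. \<Sum>p\<in>insert x P. c p * F p v \<gamma>) = addop (smop (c x) (F x)) (\<lambda>v \<gamma>. \<Sum>p\<in>P. c p * F p v \<gamma>)"
    using insert by (simp add: addop_def smop_def)
  have "\<rho> (addop (smop (c x) (F x)) (\<lambda>v \<gamma>. \<Sum>p\<in>P. c p * F p v \<gamma>)) =
     addop (smop (c x) (\<rho> (F x))) (\<rho> (\<lambda>v \<gamma>. \<Sum>p\<in>P. c p * F p v \<gamma>))"
    using insert by (simp add: OA_add[OF assms(1)] OA_smult[OF assms(1)] A_smult osum_in)
  then show ?case using insert e by (simp add: addop_def smop_def)
qed

lemma OA_fix_wop:
  assumes "OA n \<rho>" "\<And>g. g \<in> G \<Longrightarrow> \<rho> (wop n [g]) = wop n [g]" "G \<subseteq> gens n"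
  shows "set w \<subseteq> G \<Longrightarrow> \<rho> (wop n w) = wop n w"
proof (induction w)
  case Nil then show ?case using OA_R[OF assms(1)] by simp
next
  case (Cons g w)
  have e: "wop n (g # w) = wop n [g] \<circ> wop n w" using wop_append[of n "[g]" w] by (auto simp: fun_eq_iff)
  have w1: "wop n [g] \<in> Aset n" by (rule A_wop) (use Cons assms(3) in auto)
  have w2: "wop n w \<in> Aset n" by (rule A_wop) (use Cons assms(3) in auto)
  have r1: "\<rho> (wop n [g]) = wop n [g]" using assms(2) Cons.prems by simp
  have r2: "\<rho> (wop n w) = wop n w" using Cons by simp
  have "\<rho> (wop n (g # w)) = \<rho> (wop n [g]) \<circ> \<rho> (wop n w)" unfolding e by (rule OA_comp[OF assms(1) w1 w2])
  also have "\<dots> = wop n [g] \<circ> wop n w" by (simp only: r1 r2)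
  finally show ?case by (simp only: e)
qed

lemma OA_fix_all:
  assumes "OA n \<rho>" "\<And>i. i \<in> {1..n} \<Longrightarrow> \<rho> (Xop n i) = Xop n i"
    "\<And>i. i \<in> {1..n} \<Longrightarrow> \<rho> (Yop n i) = Yop n i" "a \<in> Aset n"
  shows "\<rho> a = a"
proof -
  obtain f where f: "f \<in> ncP n" "a = piop n f" using assms(4) unfolding Aset_def by auto
  have S: "finite {w. f w \<noteq> 0}" "\<And>w. w \<in> {w. f w \<noteq> 0} \<Longrightarrow> set w \<subseteq> gens n"
    using f unfolding ncP_def by auto
  have fix1: "\<rho> (wop n [g]) = wop n [g]" if "g \<in> gens n" for g
    using that assms(2,3) by (cases g) (auto simp: gens_def Xop_R Yop_R)
  have fixw: "\<rho> (wop n w) = wop n w" if "w \<in> {w. f w \<noteq> 0}" for w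
    by (rule OA_fix_wop[OF assms(1) fix1 order_refl S(2)[OF that]])
  have "\<rho> a = (\<lambda>v \<gamma>. \<Sum>w\<in>{w. f w \<noteq> 0}. f w * \<rho> (wop n w) v \<gamma>)"
    unfolding f(2) piop_def by (rule OA_osum[OF assms(1) S(1)]) (use S(2) in \<open>auto intro!: A_wop\<close>)
  also have "\<dots> = a" unfolding f(2) piop_def using fixw by simp
  finally show ?thesis .
qed




lemma less_fun_add:
  "less_fun f g \<Longrightarrow> less_fun (\<lambda>i. f i + h i) (\<lambda>i. g i + (h i :: nat))"
  unfolding less_fun_def by auto

lemma less_fun_zero: "\<not> less_fun f (\<lambda>_. 0::nat)"
  unfolding less_fun_def by auto

lemma adm_tri:
  assumes "adm n f" "adm n g"
  shows "less_fun f g \<or> f = g \<or> less_fun g f"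
proof (rule less_fun_trichotomy)
  have "{k. f k \<noteq> g k} \<subseteq> {1..n}"
  proof
    fix k assume "k \<in> {k. f k \<noteq> g k}"
    then show "k \<in> {1..n}" using assms unfolding adm_def by (cases "k \<in> {1..n}") auto
  qed
  then show "finite {k. f k \<noteq> g k}" by (rule finite_subset) simp
qed

lemma lex_max:
  assumes "finite T" "T \<noteq> {}" "\<forall>x\<in>T. adm n x"
  shows "\<exists>m\<in>T. \<forall>x\<in>T. x = m \<or> less_fun x m"
  using assms
proof (induction T rule: finite_ne_induct)
  case (singleton x) then show ?case by auto
next
  case (insert x F)
  then obtain m where m: "m \<in> F" "\<forall>y\<in>F. y = m \<or> less_fun y m" by auto
  have ax: "adm n x" and am: "adm n m" using insert m by auto
  show ?case
  proof (cases "less_fun m x")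
    case True
    have "\<forall>y\<in>insert x F. y = x \<or> less_fun y x"
    proof
      fix y assume "y \<in> insert x F"
      then consider "y = x" | "y = m" | "less_fun y m" using m by auto
      then show "y = x \<or> less_fun y x"
        by cases (use True less_fun_trans in blast)+
    qed
    then show ?thesis by blast
  next
    case False
    then have "x = m \<or> less_fun x m" using adm_tri[OF ax am] by auto
    then have "\<forall>y\<in>insert x F. y = m \<or> less_fun y m" using m by auto
    then show ?thesis using m by blast
  qed
qed

lemma unit_vec1:
  fixes w1 w2 :: "(nat \<Rightarrow> nat) \<Rightarrow> 'k::field"
  assumes S: "finite S1" "finite S2" "\<forall>\<mu>\<in>S1. adm n \<mu>" "\<forall>\<nu>\<in>S2. adm n \<nu>"
    and conv: "\<And>\<gamma>. (\<Sum>\<mu>\<in>S1. \<Sum>\<nu>\<in>S2. if (\<lambda>i. \<mu> i + \<nu> i) = \<gamma> then w1 \<mu> * w2 \<nu> else 0)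
        = (if \<gamma> = (\<lambda>_. 0) then 1 else 0)"
  shows "\<forall>\<mu>\<in>S1. \<mu> \<noteq> (\<lambda>_. 0) \<longrightarrow> w1 \<mu> = 0"
proof -
  define T1 where "T1 = {\<mu>\<in>S1. w1 \<mu> \<noteq> 0}"
  define T2 where "T2 = {\<nu>\<in>S2. w2 \<nu> \<noteq> 0}"
  have fin: "finite T1" "finite T2" using S unfolding T1_def T2_def by auto
  have ne: "T1 \<noteq> {}" "T2 \<noteq> {}"
  proof -
    have c0: "(\<Sum>\<mu>\<in>S1. \<Sum>\<nu>\<in>S2. if (\<lambda>i. \<mu> i + \<nu> i) = (\<lambda>_. 0) then w1 \<mu> * w2 \<nu> else 0) = 1"
      using conv[of "\<lambda>_. 0"] by simp
    show "T1 \<noteq> {}"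
    proof
      assume "T1 = {}"
      then have "\<forall>\<mu>\<in>S1. w1 \<mu> = 0" unfolding T1_def by auto
      then have "(\<Sum>\<mu>\<in>S1. \<Sum>\<nu>\<in>S2. if (\<lambda>i. \<mu> i + \<nu> i) = (\<lambda>_. 0) then w1 \<mu> * w2 \<nu> else 0) = 0"
        by (intro sum.neutral ballI) (auto intro!: sum.neutral)
      then show False using c0 by simp
    qed
    show "T2 \<noteq> {}"
    proof
      assume "T2 = {}"
      then have "\<forall>\<nu>\<in>S2. w2 \<nu> = 0" unfolding T2_def by auto
      then have "(\<Sum>\<mu>\<in>S1. \<Sum>\<nu>\<in>S2. if (\<lambda>i. \<mu> i + \<nu> i) = (\<lambda>_. 0) then w1 \<mu> * w2 \<nu> else 0) = 0"
        by (intro sum.neutral ballI) (auto intro!: sum.neutral)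
      then show False using c0 by simp
    qed
  qed
  obtain m1 where m1: "m1 \<in> T1" "\<forall>x\<in>T1. x = m1 \<or> less_fun x m1"
  proof -
    have "\<forall>x\<in>T1. adm n x" using S unfolding T1_def by auto
    then show ?thesis using lex_max[OF fin(1) ne(1)] that by blast
  qed
  obtain m2 where m2: "m2 \<in> T2" "\<forall>x\<in>T2. x = m2 \<or> less_fun x m2"
  proof -
    have "\<forall>x\<in>T2. adm n x" using S unfolding T2_def by auto
    then show ?thesis using lex_max[OF fin(2) ne(2)] that by blast
  qed
  let ?g = "\<lambda>i. m1 i + m2 i"
  have uniq: "\<mu> = m1 \<and> \<nu> = m2" if "\<mu> \<in> T1" "\<nu> \<in> T2" "(\<lambda>i. \<mu> i + \<nu> i) = ?g" for \<mu> \<nu>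
  proof (cases "\<mu> = m1")
    case True
    then show ?thesis using that(3) by (auto simp: fun_eq_iff)
  next
    case False
    then have l1: "less_fun \<mu> m1" using m1 that(1) by auto
    have l2: "less_fun (\<lambda>i. \<mu> i + \<nu> i) (\<lambda>i. m1 i + \<nu> i)" by (rule less_fun_add[OF l1])
    have "\<nu> = m2 \<or> less_fun \<nu> m2" using m2 that(2) by auto
    then have "(\<lambda>i. m1 i + \<nu> i) = ?g \<or> less_fun (\<lambda>i. m1 i + \<nu> i) ?g"
    proof
      assume "less_fun \<nu> m2"
      then have "less_fun (\<lambda>i. \<nu> i + m1 i) (\<lambda>i. m2 i + m1 i)" by (rule less_fun_add)
      then show ?thesis by (simp add: add.commute)
    qed simp
    then have "less_fun (\<lambda>i. \<mu> i + \<nu> i) ?g" using l2 less_fun_trans by metis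
    then show ?thesis using that(3) less_fun_irrefl by metis
  qed
  have "(\<Sum>\<mu>\<in>S1. \<Sum>\<nu>\<in>S2. if (\<lambda>i. \<mu> i + \<nu> i) = ?g then w1 \<mu> * w2 \<nu> else 0)
      = (\<Sum>\<mu>\<in>S1. \<Sum>\<nu>\<in>S2. if \<mu> = m1 \<and> \<nu> = m2 then w1 m1 * w2 m2 else 0)"
  proof (intro sum.cong refl)
    fix \<mu> \<nu> assume "\<mu> \<in> S1" "\<nu> \<in> S2"
    show "(if (\<lambda>i. \<mu> i + \<nu> i) = ?g then w1 \<mu> * w2 \<nu> else 0) = (if \<mu> = m1 \<and> \<nu> = m2 then w1 m1 * w2 m2 else 0)"
    proof (cases "w1 \<mu> = 0 \<or> w2 \<nu> = 0")
      case True
      moreover have "w1 m1 \<noteq> 0" "w2 m2 \<noteq> 0" using m1 m2 unfolding T1_def T2_def by auto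
      ultimately show ?thesis by auto
    next
      case False
      then have "\<mu> \<in> T1" "\<nu> \<in> T2" using \<open>\<mu> \<in> S1\<close> \<open>\<nu> \<in> S2\<close> unfolding T1_def T2_def by auto
      then show ?thesis using uniq by auto
    qed
  qed
  also have "\<dots> = (\<Sum>\<mu>\<in>S1. if \<mu> = m1 then w1 m1 * w2 m2 else 0)"
    using S m2 unfolding T2_def by (intro sum.cong refl) (auto simp: sum.delta')
  also have "\<dots> = w1 m1 * w2 m2" using S m1 unfolding T1_def by (simp add: sum.delta')
  finally have "w1 m1 * w2 m2 = (if ?g = (\<lambda>_. 0) then 1 else 0)" using conv[of ?g] by simp
  moreover have "w1 m1 * w2 m2 \<noteq> 0" using m1 m2 unfolding T1_def T2_def by auto
  ultimately have "?g = (\<lambda>_. 0)" by (auto split: if_splits)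
  then have m10: "m1 = (\<lambda>_. 0)" by (auto simp: fun_eq_iff)
  show ?thesis
  proof (intro ballI impI)
    fix \<mu> assume "\<mu> \<in> S1" "\<mu> \<noteq> (\<lambda>_. 0)"
    show "w1 \<mu> = 0"
    proof (rule ccontr)
      assume "w1 \<mu> \<noteq> 0"
      then have "\<mu> \<in> T1" using \<open>\<mu> \<in> S1\<close> unfolding T1_def by auto
      then have "\<mu> = m1 \<or> less_fun \<mu> m1" using m1 by auto
      then show False using m10 \<open>\<mu> \<noteq> (\<lambda>_. 0)\<close> less_fun_zero by auto
    qed
  qed
qed

lemma unit_vec2:
  fixes w1 w2 :: "(nat \<Rightarrow> nat) \<Rightarrow> 'k::field"
  assumes S: "finite S1" "finite S2" "\<forall>\<mu>\<in>S1. adm n \<mu>" "\<forall>\<nu>\<in>S2. adm n \<nu>"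
    and conv: "\<And>\<gamma>. (\<Sum>\<mu>\<in>S1. \<Sum>\<nu>\<in>S2. if (\<lambda>i. \<mu> i + \<nu> i) = \<gamma> then w1 \<mu> * w2 \<nu> else 0)
        = (if \<gamma> = (\<lambda>_. 0) then 1 else 0)"
  shows "\<forall>\<nu>\<in>S2. \<nu> \<noteq> (\<lambda>_. 0) \<longrightarrow> w2 \<nu> = 0"
proof (rule unit_vec1[OF S(2,1,4,3), of w2 w1])
  fix \<gamma>
  have "(\<Sum>\<nu>\<in>S2. \<Sum>\<mu>\<in>S1. if (\<lambda>i. \<nu> i + \<mu> i) = \<gamma> then w2 \<nu> * w1 \<mu> else 0)
      = (\<Sum>\<mu>\<in>S1. \<Sum>\<nu>\<in>S2. if (\<lambda>i. \<mu> i + \<nu> i) = \<gamma> then w1 \<mu> * w2 \<nu> else 0)"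
    by (subst sum.swap) (intro sum.cong refl, simp add: add.commute mult.commute)
  then show "(\<Sum>\<nu>\<in>S2. \<Sum>\<mu>\<in>S1. if (\<lambda>i. \<nu> i + \<mu> i) = \<gamma> then w2 \<nu> * w1 \<mu> else 0)
      = (if \<gamma> = (\<lambda>_. 0) then 1 else 0)" using conv by simp
qed




abbreviation zv :: "nat \<Rightarrow> nat" where "zv \<equiv> (\<lambda>_. 0)"

definition Pk :: "nat \<Rightarrow> nat \<Rightarrow> ('k::field) op" where
  "Pk n k v = (\<lambda>\<gamma>. if adm n \<gamma> \<and> (\<forall>i\<in>{1..k}. \<gamma> i = 0) then v \<gamma> else 0)"

definition Eop :: "nat \<Rightarrow> ('k::field) op" where
  "Eop n = Pk n n"

lemma adm_zv [simp]: "adm n zv" by (simp add: adm_def)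

lemma E_formula: "Eop n v \<gamma> = (if \<gamma> = zv then v zv else 0)"
proof -
  have "(adm n \<gamma> \<and> (\<forall>i\<in>{1..n}. \<gamma> i = 0)) = (\<gamma> = zv)"
    unfolding adm_def by (auto simp: fun_eq_iff)
  then show ?thesis unfolding Eop_def Pk_def by auto
qed

lemma XYP:
  assumes "j = Suc k" "j \<in> {1..n}"
  shows "Xop n j (Yop n j (Pk n k v)) \<gamma> =
    (if adm n \<gamma> \<and> 0 < \<gamma> j \<and> (\<forall>i\<in>{1..k}. \<gamma> i = 0) then v \<gamma> else 0)"
proof (cases "adm n \<gamma> \<and> 0 < \<gamma> j")
  case True
  let ?g = "\<gamma>(j := \<gamma> j - 1)"
  have g2: "?g(j := Suc (?g j)) = \<gamma>" using True by auto
  have a: "adm n ?g" using True assms by simp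
  have c: "(\<forall>i\<in>{1..k}. \<gamma> i = 0) = (\<forall>i\<in>{1..k}. ?g i = 0)" using assms by auto
  have "Xop n j (Yop n j (Pk n k v)) \<gamma> = Yop n j (Pk n k v) ?g" using True by (simp add: Xop_def)
  also have "\<dots> = Pk n k v (?g(j := Suc (?g j)))" using a by (simp add: Yop_def)
  also have "\<dots> = Pk n k v \<gamma>" by (simp only: g2)
  finally show ?thesis using True by (simp add: Pk_def)
next
  case False
  then show ?thesis by (auto simp: Xop_def)
qed

lemma Pk_step:
  assumes "Suc k \<in> {1..n}"
  shows "Pk n k v \<gamma> = Pk n (Suc k) v \<gamma> + Xop n (Suc k) (Yop n (Suc k) (Pk n k v)) \<gamma>"
proof -
  have q: "(\<forall>i\<in>{1..Suc k}. \<gamma> i = 0) = ((\<forall>i\<in>{1..k}. \<gamma> i = 0) \<and> \<gamma> (Suc k) = 0)"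
    using atLeastAtMostSuc_conv[of 1 k] by auto
  show ?thesis
    apply (subst XYP[OF refl assms])
    unfolding Pk_def q by auto
qed

lemma Pk_A: "k \<le> n \<Longrightarrow> (Pk n k :: ('k::field) op) \<in> Aset n"
proof (induction k)
  case 0
  have "Pk n 0 = (Rop n :: 'k op)" by (auto simp: Pk_def Rop_def fun_eq_iff)
  then show ?case using A_R by simp
next
  case (Suc k)
  have j: "Suc k \<in> {1..n}" using Suc.prems by simp
  have "(Pk n (Suc k) :: 'k op) = addop (Pk n k) (smop (-1) (Xop n (Suc k) \<circ> (Yop n (Suc k) \<circ> Pk n k)))"
    by (intro ext) (simp add: addop_def smop_def Pk_step[OF j])
  then show ?case using Suc j by (auto intro!: A_add A_smult A_comp A_X A_Y)
qed

lemma E_A: "Eop n \<in> Aset n"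
  unfolding Eop_def by (rule Pk_A) simp

lemma A_Rop:
  assumes "a \<in> Aset n"
  shows "a (Rop n v) \<gamma> = a v \<gamma>"
proof -
  have "wop n w (Rop n v) = wop n w v" for w using wop_append[of n w "[]" v] by simp
  then show ?thesis using assms unfolding Aset_def piop_def by auto
qed

lemma tele_left:
  assumes a: "a \<in> Aset n" and z: "\<And>j. j \<in> {1..n} \<Longrightarrow> a \<circ> Xop n j = zop"
  shows "a v \<gamma> = a (Eop n v) \<gamma>"
proof -
  have "k \<le> n \<Longrightarrow> a v \<gamma> = a (Pk n k v) \<gamma>" for k
  proof (induction k)
    case 0
    have "Pk n 0 v = Rop n v" by (auto simp: Pk_def Rop_def fun_eq_iff)
    then show ?case using A_Rop[OF a] by simp
  next
    case (Suc k)
    have j: "Suc k \<in> {1..n}" using Suc.prems by simp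
    have e: "Pk n k v = (\<lambda>\<gamma>. Pk n (Suc k) v \<gamma> + Xop n (Suc k) (Yop n (Suc k) (Pk n k v)) \<gamma>)"
      by (intro ext) (rule Pk_step[OF j])
    have "a (Pk n k v) \<gamma> = a (Pk n (Suc k) v) \<gamma> + a (Xop n (Suc k) (Yop n (Suc k) (Pk n k v))) \<gamma>"
      by (subst e) (rule A_add_vec[OF a])
    also have "a (Xop n (Suc k) (Yop n (Suc k) (Pk n k v))) \<gamma> = 0"
      using fun_cong[OF fun_cong[OF z[OF j], of "Yop n (Suc k) (Pk n k v)"], of \<gamma>] by (simp add: zop_def)
    finally show ?case using Suc by simp
  qed
  then show ?thesis unfolding Eop_def by simp
qed

lemma left_rank1:
  assumes a: "a \<in> Aset n" and z: "\<And>j. j \<in> {1..n} \<Longrightarrow> a \<circ> Xop n j = zop"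
  shows "a v \<gamma> = v zv * a (dl zv) \<gamma>"
proof -
  have "Eop n v = (\<lambda>\<gamma>. v zv * dl zv \<gamma>)" by (auto simp: E_formula dl_def fun_eq_iff)
  then have "a (Eop n v) \<gamma> = a (\<lambda>\<gamma>. v zv * dl zv \<gamma>) \<gamma>" by simp
  also have "\<dots> = v zv * a (dl zv) \<gamma>" by (rule A_smult_vec[OF a])
  finally show ?thesis using tele_left[OF a z] by simp
qed

lemma tele_right:
  assumes a: "a \<in> Aset n" and z: "\<And>j. j \<in> {1..n} \<Longrightarrow> Yop n j \<circ> a = zop"
  shows "Eop n (a v) = a v"
proof -
  let ?u = "a v"
  have yz: "Yop n j ?u \<gamma> = 0" if "j \<in> {1..n}" for j \<gamma>
    using fun_cong[OF fun_cong[OF z[OF that], of v], of \<gamma>] by (simp add: zop_def)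
  have "k \<le> n \<Longrightarrow> Pk n k ?u = ?u" for k
  proof (induction k)
    case 0
    show ?case by (auto simp: Pk_def fun_eq_iff A_nadm[OF a])
  next
    case (Suc k)
    have j: "Suc k \<in> {1..n}" using Suc.prems by simp
    have "Xop n (Suc k) (Yop n (Suc k) (Pk n k ?u)) \<gamma> = 0" for \<gamma>
    proof (cases "adm n \<gamma> \<and> 0 < \<gamma> (Suc k)")
      case True
      let ?g = "\<gamma>(Suc k := \<gamma> (Suc k) - 1)"
      have "Yop n (Suc k) ?u ?g = ?u \<gamma>" using True j by (simp add: Yop_def)
      then have "?u \<gamma> = 0" using yz[OF j] by simp
      moreover have "Xop n (Suc k) (Yop n (Suc k) (Pk n k ?u)) \<gamma> =
        (if adm n \<gamma> \<and> 0 < \<gamma> (Suc k) \<and> (\<forall>i\<in>{1..k}. \<gamma> i = 0) then ?u \<gamma> else 0)"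
        by (rule XYP[OF refl j])
      ultimately show ?thesis by simp
    next
      case False then show ?thesis by (auto simp: Xop_def)
    qed
    then have hP: "Pk n k ?u \<gamma> = Pk n (Suc k) ?u \<gamma>" for \<gamma> using Pk_step[OF j, of ?u \<gamma>] by simp
    have "Pk n (Suc k) ?u = Pk n k ?u" by (intro ext) (rule hP[symmetric])
    also have "\<dots> = ?u" using Suc.IH Suc.prems by simp
    finally show ?case .
  qed
  then show ?thesis unfolding Eop_def by simp
qed




lemma Mop_zv: "adm n \<alpha> \<Longrightarrow> Mop n \<alpha> zv v \<gamma> = (if adm n \<gamma> \<and> (\<forall>i. \<alpha> i \<le> \<gamma> i) then v (\<lambda>i. \<gamma> i - \<alpha> i) else 0)"
  by (simp add: Mop_formula)

lemma shift_iff: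
  assumes "adm n \<alpha>" "adm n \<beta>"
  shows "(adm n \<gamma> \<and> (\<forall>i. \<alpha> i \<le> \<gamma> i) \<and> (\<lambda>i. \<gamma> i - \<alpha> i) = \<beta>) = ((\<lambda>i. \<alpha> i + \<beta> i) = \<gamma>)"
proof
  assume h: "adm n \<gamma> \<and> (\<forall>i. \<alpha> i \<le> \<gamma> i) \<and> (\<lambda>i. \<gamma> i - \<alpha> i) = \<beta>"
  show "(\<lambda>i. \<alpha> i + \<beta> i) = \<gamma>"
  proof
    fix i show "\<alpha> i + \<beta> i = \<gamma> i" using h fun_cong[of "\<lambda>i. \<gamma> i - \<alpha> i" \<beta> i] by auto
  qed
next
  assume h: "(\<lambda>i. \<alpha> i + \<beta> i) = \<gamma>"
  have "adm n \<gamma>" using assms h unfolding adm_def by auto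
  then show "adm n \<gamma> \<and> (\<forall>i. \<alpha> i \<le> \<gamma> i) \<and> (\<lambda>i. \<gamma> i - \<alpha> i) = \<beta>" using h by auto
qed

lemma Mop_E: "adm n \<alpha> \<Longrightarrow> Mop n \<alpha> zv (Eop n v) \<gamma> = (if \<gamma> = \<alpha> then v zv else 0)"
  using shift_iff[of n \<alpha> zv \<gamma>] by (auto simp: Mop_zv E_formula)

lemma Mop_dl0:
  assumes "adm n \<alpha>" "adm n \<beta>"
  shows "Mop n \<alpha> \<beta> (dl zv) \<gamma> = (if \<gamma> = \<alpha> \<and> \<beta> = zv then 1 else 0)"
proof -
  have "(adm n \<gamma> \<and> (\<forall>i. \<alpha> i \<le> \<gamma> i) \<and> (\<lambda>i. \<gamma> i - \<alpha> i + \<beta> i) = zv) = (\<gamma> = \<alpha> \<and> \<beta> = zv)"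
  proof
    assume h: "adm n \<gamma> \<and> (\<forall>i. \<alpha> i \<le> \<gamma> i) \<and> (\<lambda>i. \<gamma> i - \<alpha> i + \<beta> i) = zv"
    then have e: "\<gamma> i - \<alpha> i + \<beta> i = 0" for i by (metis (mono_tags))
    then show "\<gamma> = \<alpha> \<and> \<beta> = zv" using h by (auto simp: fun_eq_iff) (metis add_is_0 e le_antisym diff_is_0_eq)+
  qed (use assms in auto)
  then show ?thesis using assms by (auto simp: Mop_formula dl_def)
qed

lemma cwX_setX: "set (cw Xg m \<alpha>) \<subseteq> Xg ` {1..m}"
  by (induction m) auto

lemma Mop_fix:
  fixes \<rho> :: "('k::field) op \<Rightarrow> 'k op"
  assumes r: "OA n \<rho>" and fx: "\<And>i. i \<in> {1..n} \<Longrightarrow> \<rho> (Xop n i) = Xop n i"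
  shows "\<rho> (Mop n \<alpha> zv) = Mop n \<alpha> zv"
proof -
  have "(Mop n \<alpha> zv :: 'k op) = wop n (cw Xg n \<alpha>)" unfolding Mop_def by simp
  moreover have "\<rho> (wop n (cw Xg n \<alpha>)) = wop n (cw Xg n \<alpha>)"
  proof (rule OA_fix_wop[OF r _ _ cwX_setX])
    fix g assume "g \<in> Xg ` {1..n}"
    then obtain i where i: "i \<in> {1..n}" "g = Xg i" by auto
    show "\<rho> (wop n [g]) = wop n [g]" by (simp only: i(2) wop_X[OF i(1)] fx[OF i(1)])
  qed auto
  ultimately show ?thesis by simp
qed

definition XP :: "nat \<Rightarrow> ((nat \<Rightarrow> nat) \<times> (nat \<Rightarrow> nat)) set \<Rightarrow> (((nat \<Rightarrow> nat) \<times> (nat \<Rightarrow> nat)) \<Rightarrow> 'k) \<Rightarrow> ('k::field) op" where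
  "XP n Q c = (\<lambda>v \<gamma>. \<Sum>q\<in>Q. c q * Mop n (fst q) zv v \<gamma>)"

lemma XP_A: "finite Q \<Longrightarrow> XP n Q c \<in> Aset n"
  unfolding XP_def by (rule osum_in) (auto intro: A_Mop)

lemma XP_fix:
  assumes r: "OA n \<rho>" and fx: "\<And>i. i \<in> {1..n} \<Longrightarrow> \<rho> (Xop n i) = Xop n i" and Q: "finite Q"
  shows "\<rho> (XP n Q c) = XP n Q c"
proof -
  have m: "\<And>p. \<rho> (Mop n (fst p) zv) = Mop n (fst p) zv" using Mop_fix[OF r fx] by blast
  show ?thesis unfolding XP_def by (subst OA_osum[OF r Q]) (auto intro: A_Mop simp: m)
qed

lemma XP_E:
  assumes "\<forall>q\<in>Q. adm n (fst q)"
  shows "XP n Q c (Eop n v) \<gamma> = v zv * (\<Sum>q\<in>Q. c q * (if \<gamma> = fst q then 1 else 0))"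
  unfolding XP_def sum_distrib_left by (intro sum.cong refl) (use assms in \<open>auto simp: Mop_E\<close>)

lemma Lrep:
  assumes a: "(a::'k::field op) \<in> Aset n" and z: "\<And>j. j \<in> {1..n} \<Longrightarrow> a \<circ> Xop n j = zop"
  shows "\<exists>Q c. finite Q \<and> (\<forall>q\<in>Q. adm n (fst q)) \<and> a = XP n Q c \<circ> Eop n"
proof -
  obtain Q c where Q: "finite Q" "\<forall>q\<in>Q. adm n (fst q) \<and> adm n (snd q)"
    and e: "a = (\<lambda>v \<gamma>. \<Sum>q\<in>Q. c q * Mop n (fst q) (snd q) v \<gamma>)"
    using A_nf[OF a] by blast
  define c' where "c' q = (if snd q = zv then c q else 0)" for q
  have h: "a v \<gamma> = (XP n Q c' \<circ> Eop n) v \<gamma>" for v \<gamma>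
  proof -
    have "a v \<gamma> = v zv * a (dl zv) \<gamma>" by (rule left_rank1[OF a z])
    also have "a (dl zv) \<gamma> = (\<Sum>q\<in>Q. c' q * (if \<gamma> = fst q then 1 else 0))"
      unfolding e c'_def using Q by (intro sum.cong refl) (auto simp: Mop_dl0)
    also have "v zv * \<dots> = XP n Q c' (Eop n v) \<gamma>" using XP_E[of Q n c' v \<gamma>] Q by simp
    finally show ?thesis by simp
  qed
  have "a = XP n Q c' \<circ> Eop n" by (rule ext, rule ext, rule h)
  then show ?thesis using Q by blast
qed

lemma YME:
  assumes "adm n \<alpha>" "j \<in> {1..n}"
  shows "Yop n j (Mop n \<alpha> zv (Eop n v)) \<gamma> = (if 0 < \<alpha> j \<and> \<gamma> = \<alpha>(j := \<alpha> j - 1) then v zv else 0)"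
proof (cases "adm n \<gamma>")
  case True
  have "(\<gamma>(j := Suc (\<gamma> j)) = \<alpha>) = (0 < \<alpha> j \<and> \<gamma> = \<alpha>(j := \<alpha> j - 1))"
    by (auto simp: fun_eq_iff split: if_splits)
  then show ?thesis using True assms by (simp add: Yop_def Mop_E)
next
  case False
  have "\<gamma> \<noteq> \<alpha>(j := \<alpha> j - 1)" using False assms by auto
  then show ?thesis using False by (simp add: Yop_def)
qed




lemma shift_if:
  assumes "adm n \<alpha>" "adm n \<beta>"
  shows "(if adm n \<gamma> \<and> (\<forall>i. \<alpha> i \<le> \<gamma> i) \<and> (\<lambda>i. \<gamma> i - \<alpha> i) = \<beta> then x else 0) =
         (if (\<lambda>i. \<alpha> i + \<beta> i) = \<gamma> then x else (0::'k::field))"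
  using shift_iff[OF assms, of \<gamma>] by simp

lemma conv_group:
  fixes c1 c2 :: "((nat \<Rightarrow> nat) \<times> (nat \<Rightarrow> nat)) \<Rightarrow> 'k::field"
  assumes Q: "finite Q1" "finite Q2"
  shows "(\<Sum>p\<in>Q1. \<Sum>q\<in>Q2. if (\<lambda>i. fst p i + fst q i) = \<gamma> then c1 p * c2 q else 0) =
    (\<Sum>\<mu>\<in>fst ` Q1. \<Sum>\<nu>\<in>fst ` Q2. if (\<lambda>i. \<mu> i + \<nu> i) = \<gamma> then
        (\<Sum>p\<in>{p\<in>Q1. fst p = \<mu>}. c1 p) * (\<Sum>q\<in>{q\<in>Q2. fst q = \<nu>}. c2 q) else 0)"
proof -
  define G where "G \<mu> \<nu> = (if (\<lambda>i. \<mu> i + \<nu> i) = \<gamma> then 1 else (0::'k))" for \<mu> \<nu>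
  define w1 where "w1 \<mu> = (\<Sum>p\<in>{p\<in>Q1. fst p = \<mu>}. c1 p)" for \<mu>
  define w2 where "w2 \<nu> = (\<Sum>q\<in>{q\<in>Q2. fst q = \<nu>}. c2 q)" for \<nu>
  have "(\<Sum>p\<in>Q1. \<Sum>q\<in>Q2. if (\<lambda>i. fst p i + fst q i) = \<gamma> then c1 p * c2 q else 0) =
      (\<Sum>p\<in>Q1. c1 p * (\<Sum>q\<in>Q2. c2 q * G (fst p) (fst q)))"
    by (simp add: G_def sum_distrib_left algebra_simps if_distrib cong: if_cong)
  also have "\<dots> = (\<Sum>p\<in>Q1. c1 p * (\<Sum>\<nu>\<in>fst ` Q2. w2 \<nu> * G (fst p) \<nu>))"
    unfolding w2_def by (intro sum.cong refl arg_cong[where f="\<lambda>x. _ * x"]) (rule regroup[OF Q(2)])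
  also have "\<dots> = (\<Sum>\<mu>\<in>fst ` Q1. w1 \<mu> * (\<Sum>\<nu>\<in>fst ` Q2. w2 \<nu> * G \<mu> \<nu>))"
    unfolding w1_def by (rule regroup[OF Q(1), where H="\<lambda>\<mu>. \<Sum>\<nu>\<in>fst ` Q2. w2 \<nu> * G \<mu> \<nu>"])
  also have "\<dots> = (\<Sum>\<mu>\<in>fst ` Q1. \<Sum>\<nu>\<in>fst ` Q2. if (\<lambda>i. \<mu> i + \<nu> i) = \<gamma> then w1 \<mu> * w2 \<nu> else 0)"
    by (auto simp: G_def sum_distrib_left intro!: sum.cong)
  finally show ?thesis unfolding w1_def w2_def .
qed

lemma mainX:
  fixes \<rho> \<rho>' :: "('k::field) op \<Rightarrow> 'k op"
  assumes r: "OA n \<rho>" and r': "OA n \<rho>'" and inv: "\<And>a. a \<in> Aset n \<Longrightarrow> \<rho> (\<rho>' a) = a"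
    and fx: "\<And>i. i \<in> {1..n} \<Longrightarrow> \<rho> (Xop n i) = Xop n i"
    and fx': "\<And>i. i \<in> {1..n} \<Longrightarrow> \<rho>' (Xop n i) = Xop n i"
    and j: "j \<in> {1..n}"
  shows "\<rho> (Yop n j) = Yop n j"
proof -
  have EA: "(Eop n :: 'k op) \<in> Aset n" by (rule E_A)
  have EX: "(Eop n :: 'k op) \<circ> Xop n i = zop" if "i \<in> {1..n}" for i
    by (auto simp: fun_eq_iff E_formula Xop_def zop_def)
  have LE: "\<rho>0 (Eop n) \<circ> Xop n i = zop"
    if h: "OA n \<rho>0" "\<And>i. i \<in> {1..n} \<Longrightarrow> \<rho>0 (Xop n i) = Xop n i" "i \<in> {1..n}"
    for \<rho>0 :: "'k op \<Rightarrow> 'k op" and i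
  proof -
    have "\<rho>0 (Eop n) \<circ> Xop n i = \<rho>0 (Eop n) \<circ> \<rho>0 (Xop n i)" using h by simp
    also have "\<dots> = \<rho>0 (Eop n \<circ> Xop n i)" using OA_comp[OF h(1) EA A_X[OF h(3)]] by simp
    also have "\<dots> = zop" using EX[OF h(3)] OA_zero[OF h(1)] by simp
    finally show ?thesis .
  qed
  obtain Q1 c1 where Q1: "finite Q1" "\<forall>q\<in>Q1. adm n (fst q)" and b: "\<rho>' (Eop n) = XP n Q1 c1 \<circ> Eop n"
    using Lrep[OF OA_in[OF r' EA] LE[OF r' fx']] by blast
  obtain Q2 c2 where Q2: "finite Q2" "\<forall>q\<in>Q2. adm n (fst q)" and e: "\<rho> (Eop n) = XP n Q2 c2 \<circ> Eop n"
    using Lrep[OF OA_in[OF r EA] LE[OF r fx]] by blast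
  have EE: "Eop n = XP n Q1 c1 \<circ> (XP n Q2 c2 \<circ> Eop n)"
  proof -
    have "Eop n = \<rho> (\<rho>' (Eop n))" using inv[OF EA] by simp
    also have "\<dots> = \<rho> (XP n Q1 c1 \<circ> Eop n)" using b by simp
    also have "\<dots> = \<rho> (XP n Q1 c1) \<circ> \<rho> (Eop n)" by (rule OA_comp[OF r XP_A[OF Q1(1)] EA])
    also have "\<dots> = XP n Q1 c1 \<circ> (XP n Q2 c2 \<circ> Eop n)" using XP_fix[OF r fx Q1(1)] e by simp
    finally show ?thesis .
  qed
  have cp: "(\<Sum>p\<in>Q1. \<Sum>q\<in>Q2. if (\<lambda>i. fst p i + fst q i) = \<gamma> then c1 p * c2 q else 0) = (if \<gamma> = zv then 1 else 0)" for \<gamma>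
  proof -
    let ?u = "\<lambda>\<gamma>'. \<Sum>q\<in>Q2. c2 q * (if \<gamma>' = fst q then 1 else 0)"
    have e1: "Eop n (dl zv) \<gamma> = (if \<gamma> = zv then 1 else (0::'k))" by (simp add: E_formula dl_def)
    have e2: "Eop n (dl zv) \<gamma> = XP n Q1 c1 (XP n Q2 c2 (Eop n (dl zv))) \<gamma>"
      using fun_cong[OF fun_cong[OF EE, of "dl zv"], of \<gamma>] by simp
    have e3: "XP n Q2 c2 (Eop n (dl zv)) = ?u"
      by (intro ext) (simp add: XP_E[OF Q2(2)] dl_def)
    have e4: "XP n Q1 c1 ?u \<gamma> = (\<Sum>p\<in>Q1. \<Sum>q\<in>Q2. if (\<lambda>i. fst p i + fst q i) = \<gamma> then c1 p * c2 q else 0)"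
      unfolding XP_def
    proof (intro sum.cong refl)
      fix p assume p: "p \<in> Q1"
      have ap: "adm n (fst p)" using Q1 p by auto
      have "c1 p * Mop n (fst p) zv ?u \<gamma> =
          (\<Sum>q\<in>Q2. if adm n \<gamma> \<and> (\<forall>i. fst p i \<le> \<gamma> i) \<and> (\<lambda>i. \<gamma> i - fst p i) = fst q then c1 p * c2 q else 0)"
      proof (cases "adm n \<gamma> \<and> (\<forall>i. fst p i \<le> \<gamma> i)")
        case True
        then show ?thesis unfolding Mop_zv[OF ap] by (auto simp: sum_distrib_left intro!: sum.cong)
      next
        case False
        then have "(\<Sum>q\<in>Q2. if adm n \<gamma> \<and> (\<forall>i. fst p i \<le> \<gamma> i) \<and> (\<lambda>i. \<gamma> i - fst p i) = fst q then c1 p * c2 q else 0) = 0"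
        proof (intro sum.neutral ballI)
          fix q assume "q \<in> Q2"
          have "\<not> (adm n \<gamma> \<and> (\<forall>i. fst p i \<le> \<gamma> i) \<and> (\<lambda>i. \<gamma> i - fst p i) = fst q)" using False by blast
          then show "(if adm n \<gamma> \<and> (\<forall>i. fst p i \<le> \<gamma> i) \<and> (\<lambda>i. \<gamma> i - fst p i) = fst q then c1 p * c2 q else 0) = 0"
            by (rule if_not_P)
        qed
        moreover have "Mop n (fst p) zv ?u \<gamma> = 0" unfolding Mop_zv[OF ap] by (rule if_not_P[OF False])
        ultimately show ?thesis by simp
      qed
      also have "\<dots> = (\<Sum>q\<in>Q2. if (\<lambda>i. fst p i + fst q i) = \<gamma> then c1 p * c2 q else 0)"
        using Q2(2) by (intro sum.cong refl shift_if[OF ap]) auto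
      finally show "c1 p * Mop n (fst p) zv ?u \<gamma> =
          (\<Sum>q\<in>Q2. if (\<lambda>i. fst p i + fst q i) = \<gamma> then c1 p * c2 q else 0)" .
    qed
    show ?thesis using e1 e2 e3 e4 by simp
  qed
  define w2 where "w2 \<nu> = (\<Sum>q\<in>{q\<in>Q2. fst q = \<nu>}. c2 q)" for \<nu>
  have unit: "\<forall>\<nu>\<in>fst ` Q2. \<nu> \<noteq> zv \<longrightarrow> w2 \<nu> = 0"
    unfolding w2_def
  proof (rule unit_vec2)
    fix \<gamma>
    show "(\<Sum>\<mu>\<in>fst ` Q1. \<Sum>\<nu>\<in>fst ` Q2. if (\<lambda>i. \<mu> i + \<nu> i) = \<gamma> then
        (\<Sum>p\<in>{p\<in>Q1. fst p = \<mu>}. c1 p) * (\<Sum>q\<in>{q\<in>Q2. fst q = \<nu>}. c2 q) else 0) = (if \<gamma> = zv then 1 else 0)"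
      using cp[of \<gamma>] conv_group[OF Q1(1) Q2(1), of \<gamma> c1 c2] by simp
  qed (use Q1 Q2 in auto)
  define k where "k = w2 zv"
  have w2z: "w2 \<gamma> = (if \<gamma> = zv then k else 0)" for \<gamma>
  proof (cases "\<gamma> = zv")
    case False
    show ?thesis
    proof (cases "\<gamma> \<in> fst ` Q2")
      case True then show ?thesis using unit False by auto
    next
      case F2: False
      then have e0: "{q\<in>Q2. fst q = \<gamma>} = {}" by (force simp: image_iff)
      show ?thesis using False unfolding w2_def e0 by simp
    qed
  qed (simp add: k_def)
  have eE: "\<rho> (Eop n) = smop k (Eop n)"
  proof (intro ext)
    fix v \<gamma>
    have "\<rho> (Eop n) v \<gamma> = v zv * (\<Sum>q\<in>Q2. c2 q * (if \<gamma> = fst q then 1 else 0))"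
      using e XP_E[OF Q2(2)] by simp
    also have "(\<Sum>q\<in>Q2. c2 q * (if \<gamma> = fst q then 1 else 0)) = w2 \<gamma>"
      unfolding w2_def using Q2(1) by (simp add: sum.inter_filter[symmetric] if_distrib cong: if_cong) (simp add: eq_commute)
    finally have h1: "\<rho> (Eop n) v \<gamma> = v zv * w2 \<gamma>" .
    have h2: "smop k (Eop n) v \<gamma> = v zv * w2 \<gamma>" by (simp add: smop_def E_formula w2z)
    show "\<rho> (Eop n) v \<gamma> = smop k (Eop n) v \<gamma>" by (simp only: h1 h2)
  qed
  have EEi: "Eop n \<circ> Eop n = (Eop n :: 'k op)" by (auto simp: fun_eq_iff E_formula)
  have "\<rho> (Eop n) = \<rho> (Eop n) \<circ> \<rho> (Eop n)" using OA_comp[OF r EA EA] EEi by simp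
  then have "smop k (Eop n) (dl zv) zv = (smop k (Eop n) \<circ> smop k (Eop n)) (dl zv) zv" using eE by simp
  then have kk: "k = k * k" by (simp add: smop_def E_formula dl_def)
  have k1: "k = 1"
  proof (rule ccontr)
    assume "k \<noteq> 1"
    moreover have "k * (k - 1) = 0" using kk by (simp add: algebra_simps)
    ultimately have "k = 0" by simp
    then have "\<rho> (Eop n) = \<rho> zop" using eE OA_zero[OF r] by (simp add: smop_def zop_def)
    then have "Eop n = (zop :: 'k op)" by (rule OA_inj[OF r EA A_zero])
    then have "Eop n (dl zv) zv = (0::'k)" by (simp add: zop_def)
    then show False by (simp add: E_formula dl_def)
  qed
  have rE: "\<rho> (Eop n) = Eop n" using eE k1 by (simp add: smop_def)
  have key: "\<rho> (Yop n j) (dl \<alpha>) \<gamma> = Yop n j (dl \<alpha>) \<gamma>" if a: "adm n \<alpha>" for \<alpha> \<gamma>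
  proof -
    let ?M = "Mop n \<alpha> zv \<circ> (Eop n :: 'k op)"
    have MA: "?M \<in> Aset n" by (intro A_comp A_Mop EA)
    have T: "Yop n j \<circ> ?M = (if 0 < \<alpha> j then Mop n (\<alpha>(j := \<alpha> j - 1)) zv \<circ> Eop n else zop)"
    proof -
      have a': "adm n (\<alpha>(j := \<alpha> j - 1))" using a j by simp
      show ?thesis using a' by (auto simp: fun_eq_iff YME[OF a j] Mop_E zop_def)
    qed
    have fT: "\<rho> (Yop n j \<circ> ?M) = Yop n j \<circ> ?M"
    proof (cases "0 < \<alpha> j")
      case True
      have "\<rho> (Mop n (\<alpha>(j := \<alpha> j - 1)) zv \<circ> Eop n) = Mop n (\<alpha>(j := \<alpha> j - 1)) zv \<circ> Eop n"
        using OA_comp[OF r A_Mop EA] Mop_fix[OF r fx] rE by simp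
      then show ?thesis using T True by simp
    next
      case False then show ?thesis using T OA_zero[OF r] by simp
    qed
    have "\<rho> (Yop n j \<circ> ?M) = \<rho> (Yop n j) \<circ> ?M"
      using OA_comp[OF r A_Y[OF j] MA] OA_comp[OF r A_Mop EA] Mop_fix[OF r fx] rE by simp
    then have eq: "\<rho> (Yop n j) \<circ> ?M = Yop n j \<circ> ?M" using fT by simp
    have Md: "?M (dl zv) = dl \<alpha>" using a by (auto simp: fun_eq_iff Mop_E dl_def)
    show ?thesis using fun_cong[OF fun_cong[OF eq, of "dl zv"], of \<gamma>] Md by simp
  qed
  show ?thesis by (rule A_eq_test[OF OA_in[OF r A_Y[OF j]] A_Y[OF j]]) (rule key)
qed




lemma conv_group_f:
  fixes c1 c2 :: "((nat \<Rightarrow> nat) \<times> (nat \<Rightarrow> nat)) \<Rightarrow> 'k::field"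
  assumes Q: "finite Q1" "finite Q2"
  shows "(\<Sum>p\<in>Q1. \<Sum>q\<in>Q2. if (\<lambda>i. f p i + f q i) = \<gamma> then c1 p * c2 q else 0) =
    (\<Sum>\<mu>\<in>f ` Q1. \<Sum>\<nu>\<in>f ` Q2. if (\<lambda>i. \<mu> i + \<nu> i) = \<gamma> then
        (\<Sum>p\<in>{p\<in>Q1. f p = \<mu>}. c1 p) * (\<Sum>q\<in>{q\<in>Q2. f q = \<nu>}. c2 q) else 0)"
proof -
  define G where "G \<mu> \<nu> = (if (\<lambda>i. \<mu> i + \<nu> i) = \<gamma> then 1 else (0::'k))" for \<mu> \<nu>
  define w1 where "w1 \<mu> = (\<Sum>p\<in>{p\<in>Q1. f p = \<mu>}. c1 p)" for \<mu>
  define w2 where "w2 \<nu> = (\<Sum>q\<in>{q\<in>Q2. f q = \<nu>}. c2 q)" for \<nu>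
  have "(\<Sum>p\<in>Q1. \<Sum>q\<in>Q2. if (\<lambda>i. f p i + f q i) = \<gamma> then c1 p * c2 q else 0) =
      (\<Sum>p\<in>Q1. c1 p * (\<Sum>q\<in>Q2. c2 q * G (f p) (f q)))"
    by (simp add: G_def sum_distrib_left algebra_simps if_distrib cong: if_cong)
  also have "\<dots> = (\<Sum>p\<in>Q1. c1 p * (\<Sum>\<nu>\<in>f ` Q2. w2 \<nu> * G (f p) \<nu>))"
    unfolding w2_def by (intro sum.cong refl arg_cong[where f="\<lambda>x. _ * x"]) (rule regroup[OF Q(2)])
  also have "\<dots> = (\<Sum>\<mu>\<in>f ` Q1. w1 \<mu> * (\<Sum>\<nu>\<in>f ` Q2. w2 \<nu> * G \<mu> \<nu>))"
    unfolding w1_def by (rule regroup[OF Q(1), where H="\<lambda>\<mu>. \<Sum>\<nu>\<in>f ` Q2. w2 \<nu> * G \<mu> \<nu>"])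
  also have "\<dots> = (\<Sum>\<mu>\<in>f ` Q1. \<Sum>\<nu>\<in>f ` Q2. if (\<lambda>i. \<mu> i + \<nu> i) = \<gamma> then w1 \<mu> * w2 \<nu> else 0)"
    by (auto simp: G_def sum_distrib_left intro!: sum.cong)
  finally show ?thesis unfolding w1_def w2_def .
qed

lemma Mop_zvY: "adm n \<beta> \<Longrightarrow> Mop n zv \<beta> v \<gamma> = (if adm n \<gamma> then v (\<lambda>i. \<gamma> i + \<beta> i) else 0)"
  by (simp add: Mop_formula)

lemma E_Mop:
  assumes "adm n \<alpha>" "adm n \<beta>"
  shows "Eop n (Mop n \<alpha> \<beta> v) \<gamma> = (if \<gamma> = zv \<and> \<alpha> = zv then v \<beta> else 0)"
proof -
  have "(\<forall>i. \<alpha> i \<le> 0) = (\<alpha> = zv)" by (auto simp: fun_eq_iff)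
  then show ?thesis using assms by (auto simp: E_formula Mop_formula)
qed

lemma cwY_setY: "set (cw Yg m \<alpha>) \<subseteq> Yg ` {1..m}"
  by (induction m) auto

lemma MopY_fix:
  fixes \<rho> :: "('k::field) op \<Rightarrow> 'k op"
  assumes r: "OA n \<rho>" and fy: "\<And>i. i \<in> {1..n} \<Longrightarrow> \<rho> (Yop n i) = Yop n i"
  shows "\<rho> (Mop n zv \<beta>) = Mop n zv \<beta>"
proof -
  have "(Mop n zv \<beta> :: 'k op) = wop n (cw Yg n \<beta>)" unfolding Mop_def by simp
  moreover have "\<rho> (wop n (cw Yg n \<beta>)) = wop n (cw Yg n \<beta>)"
  proof (rule OA_fix_wop[OF r _ _ cwY_setY])
    fix g assume "g \<in> Yg ` {1..n}"
    then obtain i where i: "i \<in> {1..n}" "g = Yg i" by auto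
    show "\<rho> (wop n [g]) = wop n [g]" by (simp only: i(2) wop_Y[OF i(1)] fy[OF i(1)])
  qed auto
  ultimately show ?thesis by simp
qed

definition YP :: "nat \<Rightarrow> ((nat \<Rightarrow> nat) \<times> (nat \<Rightarrow> nat)) set \<Rightarrow> (((nat \<Rightarrow> nat) \<times> (nat \<Rightarrow> nat)) \<Rightarrow> 'k) \<Rightarrow> ('k::field) op" where
  "YP n Q c = (\<lambda>v \<gamma>. \<Sum>q\<in>Q. c q * Mop n zv (snd q) v \<gamma>)"

lemma YP_A: "finite Q \<Longrightarrow> YP n Q c \<in> Aset n"
  unfolding YP_def by (rule osum_in) (auto intro: A_Mop)

lemma YP_fix:
  assumes r: "OA n \<rho>" and fy: "\<And>i. i \<in> {1..n} \<Longrightarrow> \<rho> (Yop n i) = Yop n i" and Q: "finite Q"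
  shows "\<rho> (YP n Q c) = YP n Q c"
proof -
  have m: "\<And>p. \<rho> (Mop n zv (snd p)) = Mop n zv (snd p)" using MopY_fix[OF r fy] by blast
  show ?thesis unfolding YP_def by (subst OA_osum[OF r Q]) (auto intro: A_Mop simp: m)
qed

lemma E_YP:
  assumes "\<forall>q\<in>Q. adm n (snd q)"
  shows "Eop n (YP n Q c v) \<gamma> = (if \<gamma> = zv then (\<Sum>q\<in>Q. c q * v (snd q)) else 0)"
  using assms by (auto simp: E_formula YP_def Mop_zvY intro!: sum.cong)

lemma Rrep:
  assumes a: "(a::'k::field op) \<in> Aset n" and z: "\<And>j. j \<in> {1..n} \<Longrightarrow> Yop n j \<circ> a = zop"
  shows "\<exists>Q c. finite Q \<and> (\<forall>q\<in>Q. adm n (snd q)) \<and> a = Eop n \<circ> YP n Q c"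
proof -
  obtain Q c where Q: "finite Q" "\<forall>q\<in>Q. adm n (fst q) \<and> adm n (snd q)"
    and e: "a = (\<lambda>v \<gamma>. \<Sum>q\<in>Q. c q * Mop n (fst q) (snd q) v \<gamma>)"
    using A_nf[OF a] by blast
  define c' where "c' q = (if fst q = zv then c q else 0)" for q
  have h: "a v \<gamma> = (Eop n \<circ> YP n Q c') v \<gamma>" for v \<gamma>
  proof -
    have "a v \<gamma> = Eop n (a v) \<gamma>" using tele_right[OF a z] by simp
    also have "\<dots> = (if \<gamma> = zv then (\<Sum>q\<in>Q. c' q * v (snd q)) else 0)"
    proof -
      have "Mop n (fst q) (snd q) v zv = (if fst q = zv then v (snd q) else 0)" if "q \<in> Q" for q
      proof -
        have "(\<forall>i. fst q i \<le> 0) = (fst q = zv)" by (auto simp: fun_eq_iff)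
        then show ?thesis using Q that by (auto simp: Mop_formula)
      qed
      then show ?thesis unfolding e c'_def by (auto simp: E_formula intro!: sum.cong)
    qed
    also have "\<dots> = (Eop n \<circ> YP n Q c') v \<gamma>" using E_YP[of Q n c' v \<gamma>] Q by simp
    finally show ?thesis .
  qed
  have "a = Eop n \<circ> YP n Q c'" by (rule ext, rule ext, rule h)
  then show ?thesis using Q by blast
qed

lemma mainY:
  fixes \<rho> \<rho>' :: "('k::field) op \<Rightarrow> 'k op"
  assumes r: "OA n \<rho>" and r': "OA n \<rho>'" and inv: "\<And>a. a \<in> Aset n \<Longrightarrow> \<rho> (\<rho>' a) = a"
    and fy: "\<And>i. i \<in> {1..n} \<Longrightarrow> \<rho> (Yop n i) = Yop n i"
    and fy': "\<And>i. i \<in> {1..n} \<Longrightarrow> \<rho>' (Yop n i) = Yop n i"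
    and j: "j \<in> {1..n}"
  shows "\<rho> (Xop n j) = Xop n j"
proof -
  have EA: "(Eop n :: 'k op) \<in> Aset n" by (rule E_A)
  have YE: "Yop n i \<circ> (Eop n :: 'k op) = zop" if "i \<in> {1..n}" for i
    by (auto simp: fun_eq_iff E_formula Yop_def zop_def)
  have RE: "Yop n i \<circ> \<rho>0 (Eop n) = zop"
    if h: "OA n \<rho>0" "\<And>i. i \<in> {1..n} \<Longrightarrow> \<rho>0 (Yop n i) = Yop n i" "i \<in> {1..n}"
    for \<rho>0 :: "'k op \<Rightarrow> 'k op" and i
  proof -
    have "Yop n i \<circ> \<rho>0 (Eop n) = \<rho>0 (Yop n i) \<circ> \<rho>0 (Eop n)" using h by simp
    also have "\<dots> = \<rho>0 (Yop n i \<circ> Eop n)" using OA_comp[OF h(1) A_Y[OF h(3)] EA] by simp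
    also have "\<dots> = zop" using YE[OF h(3)] OA_zero[OF h(1)] by simp
    finally show ?thesis .
  qed
  obtain Q1 c1 where Q1: "finite Q1" "\<forall>q\<in>Q1. adm n (snd q)" and b: "\<rho>' (Eop n) = Eop n \<circ> YP n Q1 c1"
    using Rrep[OF OA_in[OF r' EA] RE[OF r' fy']] by blast
  obtain Q2 c2 where Q2: "finite Q2" "\<forall>q\<in>Q2. adm n (snd q)" and e: "\<rho> (Eop n) = Eop n \<circ> YP n Q2 c2"
    using Rrep[OF OA_in[OF r EA] RE[OF r fy]] by blast
  have EE: "Eop n = (Eop n \<circ> YP n Q2 c2) \<circ> YP n Q1 c1"
  proof -
    have "Eop n = \<rho> (\<rho>' (Eop n))" using inv[OF EA] by simp
    also have "\<dots> = \<rho> (Eop n \<circ> YP n Q1 c1)" using b by simp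
    also have "\<dots> = \<rho> (Eop n) \<circ> \<rho> (YP n Q1 c1)" by (rule OA_comp[OF r EA YP_A[OF Q1(1)]])
    also have "\<dots> = (Eop n \<circ> YP n Q2 c2) \<circ> YP n Q1 c1" using YP_fix[OF r fy Q1(1)] e by simp
    finally show ?thesis .
  qed
  have cp: "(\<Sum>p\<in>Q2. \<Sum>q\<in>Q1. if (\<lambda>i. snd p i + snd q i) = \<gamma> then c2 p * c1 q else 0) = (if \<gamma> = zv then 1 else 0)" for \<gamma>
  proof -
    have e1: "Eop n (dl \<gamma>) zv = (if \<gamma> = zv then 1 else (0::'k))" by (auto simp: E_formula dl_def)
    have e2: "Eop n (dl \<gamma>) zv = Eop n (YP n Q2 c2 (YP n Q1 c1 (dl \<gamma>))) zv"
      using fun_cong[OF fun_cong[OF EE, of "dl \<gamma>"], of zv] by simp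
    have e3: "Eop n (YP n Q2 c2 (YP n Q1 c1 (dl \<gamma>))) zv = (\<Sum>p\<in>Q2. c2 p * YP n Q1 c1 (dl \<gamma>) (snd p))"
      using E_YP[OF Q2(2), of c2 "YP n Q1 c1 (dl \<gamma>)" zv] by simp
    have e4: "YP n Q1 c1 (dl \<gamma>) (snd p) = (\<Sum>q\<in>Q1. if (\<lambda>i. snd p i + snd q i) = \<gamma> then c1 q else 0)"
      if "p \<in> Q2" for p
    proof -
      have ap: "adm n (snd p)" using Q2 that by auto
      show ?thesis unfolding YP_def using Q1(2) ap by (auto simp: Mop_zvY dl_def intro!: sum.cong)
    qed
    have "(\<Sum>p\<in>Q2. c2 p * YP n Q1 c1 (dl \<gamma>) (snd p)) =
        (\<Sum>p\<in>Q2. \<Sum>q\<in>Q1. if (\<lambda>i. snd p i + snd q i) = \<gamma> then c2 p * c1 q else 0)"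
      using e4 by (auto simp: sum_distrib_left if_distrib intro!: sum.cong cong: if_cong)
    then show ?thesis using e1 e2 e3 by simp
  qed
  define w2 where "w2 \<nu> = (\<Sum>q\<in>{q\<in>Q2. snd q = \<nu>}. c2 q)" for \<nu>
  have unit: "\<forall>\<nu>\<in>snd ` Q2. \<nu> \<noteq> zv \<longrightarrow> w2 \<nu> = 0"
    unfolding w2_def
  proof (rule unit_vec1)
    fix \<gamma>
    show "(\<Sum>\<mu>\<in>snd ` Q2. \<Sum>\<nu>\<in>snd ` Q1. if (\<lambda>i. \<mu> i + \<nu> i) = \<gamma> then
        (\<Sum>p\<in>{p\<in>Q2. snd p = \<mu>}. c2 p) * (\<Sum>q\<in>{q\<in>Q1. snd q = \<nu>}. c1 q) else 0) = (if \<gamma> = zv then 1 else 0)"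
      using cp[of \<gamma>] conv_group_f[OF Q2(1) Q1(1), of snd \<gamma> c2 c1] by simp
  qed (use Q1 Q2 in auto)
  define k where "k = w2 zv"
  have w2z: "w2 \<gamma> = (if \<gamma> = zv then k else 0)" for \<gamma>
  proof (cases "\<gamma> = zv")
    case False
    show ?thesis
    proof (cases "\<gamma> \<in> snd ` Q2")
      case True then show ?thesis using unit False by auto
    next
      case F2: False
      then have e0: "{q\<in>Q2. snd q = \<gamma>} = {}" by (force simp: image_iff)
      show ?thesis using False unfolding w2_def e0 by simp
    qed
  qed (simp add: k_def)
  have sumk: "(\<Sum>q\<in>Q2. c2 q * v (snd q)) = k * v zv" for v :: "'k vec"
  proof -
    have "(\<Sum>q\<in>Q2. c2 q * v (snd q)) = (\<Sum>\<nu>\<in>snd ` Q2. w2 \<nu> * v \<nu>)"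
      unfolding w2_def by (rule regroup[OF Q2(1)])
    also have "\<dots> = (\<Sum>\<nu>\<in>snd ` Q2. if \<nu> = zv then k * v zv else 0)"
      by (intro sum.cong refl) (simp add: w2z)
    also have "\<dots> = (if zv \<in> snd ` Q2 then k * v zv else 0)" using Q2(1) by (simp add: sum.delta')
    also have "\<dots> = k * v zv"
    proof (cases "zv \<in> snd ` Q2")
      case False
      then have e0: "{q\<in>Q2. snd q = zv} = {}" by (force simp: image_iff)
      then have "k = 0" unfolding k_def w2_def e0 by simp
      then show ?thesis by simp
    qed simp
    finally show ?thesis .
  qed
  have eE: "\<rho> (Eop n) = smop k (Eop n)"
  proof (intro ext)
    fix v \<gamma>
    have "\<rho> (Eop n) v \<gamma> = Eop n (YP n Q2 c2 v) \<gamma>" using e by simp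
    also have "\<dots> = (if \<gamma> = zv then (\<Sum>q\<in>Q2. c2 q * v (snd q)) else 0)" by (rule E_YP[OF Q2(2)])
    also have "\<dots> = (if \<gamma> = zv then k * v zv else 0)" using sumk by simp
    finally have h1: "\<rho> (Eop n) v \<gamma> = (if \<gamma> = zv then k * v zv else 0)" .
    have h2: "smop k (Eop n) v \<gamma> = (if \<gamma> = zv then k * v zv else 0)" by (simp add: smop_def E_formula)
    show "\<rho> (Eop n) v \<gamma> = smop k (Eop n) v \<gamma>" by (simp only: h1 h2)
  qed
  have EEi: "Eop n \<circ> Eop n = (Eop n :: 'k op)" by (auto simp: fun_eq_iff E_formula)
  have "\<rho> (Eop n) = \<rho> (Eop n) \<circ> \<rho> (Eop n)" using OA_comp[OF r EA EA] EEi by simp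
  then have "smop k (Eop n) (dl zv) zv = (smop k (Eop n) \<circ> smop k (Eop n)) (dl zv) zv" using eE by simp
  then have kk: "k = k * k" by (simp add: smop_def E_formula dl_def)
  have k1: "k = 1"
  proof (rule ccontr)
    assume "k \<noteq> 1"
    moreover have "k * (k - 1) = 0" using kk by (simp add: algebra_simps)
    ultimately have "k = 0" by simp
    then have "\<rho> (Eop n) = \<rho> zop" using eE OA_zero[OF r] by (simp add: smop_def zop_def)
    then have "Eop n = (zop :: 'k op)" by (rule OA_inj[OF r EA A_zero])
    then have "Eop n (dl zv) zv = (0::'k)" by (simp add: zop_def)
    then show False by (simp add: E_formula dl_def)
  qed
  have rE: "\<rho> (Eop n) = Eop n" using eE k1 by (simp add: smop_def)
  have key: "\<rho> (Xop n j) (dl \<gamma>) \<beta> = Xop n j (dl \<gamma>) \<beta>" if g: "adm n \<gamma>" for \<gamma> \<beta>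
  proof (cases "adm n \<beta>")
    case False
    then show ?thesis using A_nadm[OF OA_in[OF r A_X[OF j]]] A_nadm[OF A_X[OF j]] by simp
  next
    case a: True
    let ?N = "Eop n \<circ> (Mop n zv \<beta> :: 'k op)"
    have NA: "?N \<in> Aset n" by (intro A_comp A_Mop EA)
    have NM: "Eop n (Mop n zv \<beta>' w) \<gamma>' = (if \<gamma>' = zv then w \<beta>' else 0)" if "adm n \<beta>'"
      for \<beta>' and w :: "'k vec" and \<gamma>' using that by (simp add: E_formula Mop_zvY)
    have T: "?N \<circ> Xop n j = (if 0 < \<beta> j then Eop n \<circ> Mop n zv (\<beta>(j := \<beta> j - 1)) else zop)"
    proof -
      have a': "adm n (\<beta>(j := \<beta> j - 1))" using a j by simp
      show ?thesis
      proof (intro ext)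
        fix v \<gamma>'
        show "(?N \<circ> Xop n j) v \<gamma>' = (if 0 < \<beta> j then Eop n \<circ> Mop n zv (\<beta>(j := \<beta> j - 1)) else zop) v \<gamma>'"
          using a j by (simp add: NM Xop_def zop_def)
      qed
    qed
    have rN: "\<rho> ?N = ?N" using OA_comp[OF r EA A_Mop] MopY_fix[OF r fy] rE by simp
    have fT: "\<rho> (?N \<circ> Xop n j) = ?N \<circ> Xop n j"
    proof (cases "0 < \<beta> j")
      case True
      have "\<rho> (Eop n \<circ> Mop n zv (\<beta>(j := \<beta> j - 1))) = Eop n \<circ> Mop n zv (\<beta>(j := \<beta> j - 1))"
        using OA_comp[OF r EA A_Mop] MopY_fix[OF r fy] rE by simp
      then show ?thesis using T True by simp
    next
      case False then show ?thesis using T OA_zero[OF r] by simp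
    qed
    have "\<rho> (?N \<circ> Xop n j) = ?N \<circ> \<rho> (Xop n j)"
      using OA_comp[OF r NA A_X[OF j]] rN by simp
    then have eq: "?N \<circ> \<rho> (Xop n j) = ?N \<circ> Xop n j" using fT by simp
    have Nv: "?N w zv = w \<beta>" for w :: "'k vec" using a by (simp add: E_formula Mop_zvY)
    show ?thesis using fun_cong[OF fun_cong[OF eq, of "dl \<gamma>"], of zv] Nv by simp
  qed
  show ?thesis by (rule A_eq_test[OF OA_in[OF r A_X[OF j]] A_X[OF j]]) (rule key)
qed




lemma OA_bij_facts:
  assumes "OA n \<tau>"
  shows "\<And>a. a \<in> Aset n \<Longrightarrow> \<tau> (inv_into (Aset n) \<tau> a) = a"
    and "\<And>a. a \<in> Aset n \<Longrightarrow> inv_into (Aset n) \<tau> (\<tau> a) = a"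
proof -
  have b: "bij_betw \<tau> (Aset n) (Aset n)" using assms unfolding OA_def by auto
  show "\<And>a. a \<in> Aset n \<Longrightarrow> \<tau> (inv_into (Aset n) \<tau> a) = a"
    using b by (metis bij_betw_def f_inv_into_f)
  show "\<And>a. a \<in> Aset n \<Longrightarrow> inv_into (Aset n) \<tau> (\<tau> a) = a"
    using b by (metis bij_betw_def inv_into_f_f)
qed

lemma agree_gen:
  fixes \<sigma> \<tau> :: "('k::field) op \<Rightarrow> 'k op"
  assumes s: "OA n \<sigma>" and t: "OA n \<tau>"
    and X: "\<And>i. i \<in> {1..n} \<Longrightarrow> \<sigma> (Xop n i) = \<tau> (Xop n i)"
    and Y: "\<And>i. i \<in> {1..n} \<Longrightarrow> \<sigma> (Yop n i) = \<tau> (Yop n i)"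
  shows "\<forall>a\<in>Aset n. \<sigma> a = \<tau> a"
proof
  fix a :: "'k op" assume a: "a \<in> Aset n"
  let ?\<rho> = "inv_into (Aset n) \<tau> \<circ> \<sigma>"
  have r: "OA n ?\<rho>" by (rule OA_compose[OF OA_inv[OF t] s])
  have "?\<rho> (Xop n i) = Xop n i" if "i \<in> {1..n}" for i
    using X[OF that] OA_bij_facts(2)[OF t A_X[OF that]] by simp
  moreover have "?\<rho> (Yop n i) = Yop n i" if "i \<in> {1..n}" for i
    using Y[OF that] OA_bij_facts(2)[OF t A_Y[OF that]] by simp
  ultimately have "?\<rho> a = a" using OA_fix_all[OF r _ _ a] by blast
  then have "\<tau> (?\<rho> a) = \<tau> a" by simp
  then show "\<sigma> a = \<tau> a" using OA_bij_facts(1)[OF t OA_in[OF s a]] by simp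
qed

lemma XY_from_X:
  fixes \<sigma> \<tau> :: "('k::field) op \<Rightarrow> 'k op"
  assumes s: "OA n \<sigma>" and t: "OA n \<tau>"
    and X: "\<And>i. i \<in> {1..n} \<Longrightarrow> \<sigma> (Xop n i) = \<tau> (Xop n i)"
  shows "\<And>i. i \<in> {1..n} \<Longrightarrow> \<sigma> (Yop n i) = \<tau> (Yop n i)"
proof -
  fix j assume j: "j \<in> {1..n}"
  let ?\<rho> = "inv_into (Aset n) \<tau> \<circ> \<sigma>"
  let ?\<rho>' = "inv_into (Aset n) \<sigma> \<circ> \<tau>"
  have r: "OA n ?\<rho>" by (rule OA_compose[OF OA_inv[OF t] s])
  have r': "OA n ?\<rho>'" by (rule OA_compose[OF OA_inv[OF s] t])
  have inv: "?\<rho> (?\<rho>' a) = a" if "a \<in> Aset n" for a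
    using OA_bij_facts(1)[OF s OA_in[OF t that]] OA_bij_facts(2)[OF t that] by simp
  have fx: "?\<rho> (Xop n i) = Xop n i" if "i \<in> {1..n}" for i
    using X[OF that] OA_bij_facts(2)[OF t A_X[OF that]] by simp
  have fx': "?\<rho>' (Xop n i) = Xop n i" if "i \<in> {1..n}" for i
    using X[OF that] OA_bij_facts(2)[OF s A_X[OF that]] by simp
  have "?\<rho> (Yop n j) = Yop n j" by (rule mainX[OF r r' inv fx fx' j])
  then have "\<tau> (?\<rho> (Yop n j)) = \<tau> (Yop n j)" by simp
  then show "\<sigma> (Yop n j) = \<tau> (Yop n j)" using OA_bij_facts(1)[OF t OA_in[OF s A_Y[OF j]]] by simp
qed

lemma XY_from_Y:
  fixes \<sigma> \<tau> :: "('k::field) op \<Rightarrow> 'k op"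
  assumes s: "OA n \<sigma>" and t: "OA n \<tau>"
    and Y: "\<And>i. i \<in> {1..n} \<Longrightarrow> \<sigma> (Yop n i) = \<tau> (Yop n i)"
  shows "\<And>i. i \<in> {1..n} \<Longrightarrow> \<sigma> (Xop n i) = \<tau> (Xop n i)"
proof -
  fix j assume j: "j \<in> {1..n}"
  let ?\<rho> = "inv_into (Aset n) \<tau> \<circ> \<sigma>"
  let ?\<rho>' = "inv_into (Aset n) \<sigma> \<circ> \<tau>"
  have r: "OA n ?\<rho>" by (rule OA_compose[OF OA_inv[OF t] s])
  have r': "OA n ?\<rho>'" by (rule OA_compose[OF OA_inv[OF s] t])
  have inv: "?\<rho> (?\<rho>' a) = a" if "a \<in> Aset n" for a
    using OA_bij_facts(1)[OF s OA_in[OF t that]] OA_bij_facts(2)[OF t that] by simp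
  have fy: "?\<rho> (Yop n i) = Yop n i" if "i \<in> {1..n}" for i
    using Y[OF that] OA_bij_facts(2)[OF t A_Y[OF that]] by simp
  have fy': "?\<rho>' (Yop n i) = Yop n i" if "i \<in> {1..n}" for i
    using Y[OF that] OA_bij_facts(2)[OF s A_Y[OF that]] by simp
  have "?\<rho> (Xop n j) = Xop n j" by (rule mainY[OF r r' inv fy fy' j])
  then have "\<tau> (?\<rho> (Xop n j)) = \<tau> (Xop n j)" by simp
  then show "\<sigma> (Xop n j) = \<tau> (Xop n j)" using OA_bij_facts(1)[OF t OA_in[OF s A_X[OF j]]] by simp
qed

theorem theorem3p6:
  fixes \<sigma> \<tau> :: "('k::field_char_0) ncpoly set \<Rightarrow> 'k ncpoly set"
    and n :: nat
  assumes "n \<ge> 1" and "Sn_aut n \<sigma>" and "Sn_aut n \<tau>"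
  shows "((\<forall>A\<in>Sn n. \<sigma> A = \<tau> A) \<longleftrightarrow> (\<forall>i\<in>{1..n}. \<sigma> (Sn_x n i) = \<tau> (Sn_x n i)))
       \<and> ((\<forall>A\<in>Sn n. \<sigma> A = \<tau> A) \<longleftrightarrow> (\<forall>i\<in>{1..n}. \<sigma> (Sn_y n i) = \<tau> (Sn_y n i)))"
proof -
  let ?iP = "inv_into (Sn n) (Pi n :: 'k ncpoly set \<Rightarrow> 'k op)"
  define s where "s a = Pi n (\<sigma> (?iP a))" for a
  define t where "t a = Pi n (\<tau> (?iP a))" for a
  have s: "OA n s" unfolding s_def by (rule OA_Sn[OF assms(2)])
  have t: "OA n t" unfolding t_def by (rule OA_Sn[OF assms(3)])
  have iP: "?iP (Pi n A) = A" if "A \<in> Sn n" for A by (rule inv_into_f_f[OF Pi_inj that])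
  have sin: "\<sigma> A \<in> Sn n" if "A \<in> Sn n" for A
    using assms(2) that unfolding Sn_aut_def bij_betw_def by auto
  have tin: "\<tau> A \<in> Sn n" if "A \<in> Sn n" for A
    using assms(3) that unfolding Sn_aut_def bij_betw_def by auto
  have sP: "s (Pi n A) = Pi n (\<sigma> A)" if "A \<in> Sn n" for A unfolding s_def using iP[OF that] by simp
  have tP: "t (Pi n A) = Pi n (\<tau> A)" if "A \<in> Sn n" for A unfolding t_def using iP[OF that] by simp
  have eqA: "\<sigma> A = \<tau> A \<longleftrightarrow> s (Pi n A) = t (Pi n A)" if "A \<in> Sn n" for A
    using sP[OF that] tP[OF that] inj_onD[OF Pi_inj _ sin[OF that] tin[OF that]] by auto
  have all: "(\<forall>A\<in>Sn n. \<sigma> A = \<tau> A) \<longleftrightarrow> (\<forall>a\<in>Aset n. s a = t a)"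
  proof
    assume h: "\<forall>A\<in>Sn n. \<sigma> A = \<tau> A"
    show "\<forall>a\<in>Aset n. s a = t a"
    proof
      fix a :: "'k op" assume "a \<in> Aset n"
      then obtain A where "A \<in> Sn n" "a = Pi n A" using Pi_img by blast
      then show "s a = t a" using h eqA by blast
    qed
  next
    assume h: "\<forall>a\<in>Aset n. s a = t a"
    show "\<forall>A\<in>Sn n. \<sigma> A = \<tau> A"
    proof
      fix A :: "'k ncpoly set" assume A: "A \<in> Sn n"
      have "Pi n A \<in> Aset n" using A Pi_img by blast
      then show "\<sigma> A = \<tau> A" using h eqA[OF A] by blast
    qed
  qed
  have xx: "\<sigma> (Sn_x n i) = \<tau> (Sn_x n i) \<longleftrightarrow> s (Xop n i) = t (Xop n i)" if "i \<in> {1..n}" for i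
    using eqA[OF Sn_x_in[OF that]] Pi_x[OF that, where 'a='k] by simp
  have yy: "\<sigma> (Sn_y n i) = \<tau> (Sn_y n i) \<longleftrightarrow> s (Yop n i) = t (Yop n i)" if "i \<in> {1..n}" for i
    using eqA[OF Sn_y_in[OF that]] Pi_y[OF that, where 'a='k] by simp
  have 1: "(\<forall>A\<in>Sn n. \<sigma> A = \<tau> A) \<longleftrightarrow> (\<forall>i\<in>{1..n}. \<sigma> (Sn_x n i) = \<tau> (Sn_x n i))"
  proof
    assume "\<forall>A\<in>Sn n. \<sigma> A = \<tau> A"
    then show "\<forall>i\<in>{1..n}. \<sigma> (Sn_x n i) = \<tau> (Sn_x n i)" using Sn_x_in by blast
  next
    assume "\<forall>i\<in>{1..n}. \<sigma> (Sn_x n i) = \<tau> (Sn_x n i)"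
    then have X: "\<And>i. i \<in> {1..n} \<Longrightarrow> s (Xop n i) = t (Xop n i)" using xx by blast
    have "\<forall>a\<in>Aset n. s a = t a" by (rule agree_gen[OF s t X XY_from_X[OF s t X]])
    then show "\<forall>A\<in>Sn n. \<sigma> A = \<tau> A" using all by blast
  qed
  have 2: "(\<forall>A\<in>Sn n. \<sigma> A = \<tau> A) \<longleftrightarrow> (\<forall>i\<in>{1..n}. \<sigma> (Sn_y n i) = \<tau> (Sn_y n i))"
  proof
    assume "\<forall>A\<in>Sn n. \<sigma> A = \<tau> A"
    then show "\<forall>i\<in>{1..n}. \<sigma> (Sn_y n i) = \<tau> (Sn_y n i)" using Sn_y_in by blast
  next
    assume "\<forall>i\<in>{1..n}. \<sigma> (Sn_y n i) = \<tau> (Sn_y n i)"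
    then have Y: "\<And>i. i \<in> {1..n} \<Longrightarrow> s (Yop n i) = t (Yop n i)" using yy by blast
    have "\<forall>a\<in>Aset n. s a = t a" by (rule agree_gen[OF s t XY_from_Y[OF s t Y] Y])
    then show "\<forall>A\<in>Sn n. \<sigma> A = \<tau> A" using all by blast
  qed
  show ?thesis using 1 2 by blast
qed


end
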